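(* Let $n,m,p,N$ be positive integers, $A\in\mathbb{R}^{n\times n}$, $B\in\mathbb{R}^{n\times m}$, $C\in\mathbb{R}^{p\times n}$, $D\in\mathbb{R}^{p\times p}$ with $DD^T\succ 0$, and let $\mathcal{O}_N,\mathcal{O}_N^R,\mathcal{R}_N,\mathcal{D}_N,\mathcal{H}_N,\mathcal{L}_N,M_N,\tilde\phi_N,S_\Phi^{-1},\mathcal{Q}_\Phi,\Omega_\Phi,W_\Phi$ be as defined in the context. Let $\Phi_1,\Phi_2$ be symmetric $Nn\times Nn$ matrices with $0\preceq \Phi_2\preceq \Phi_1\prec \tilde\phi_N I_{Nn}$. Then $$\Omega_{\Phi_1}\preceq \Omega_{\Phi_2}\qquad\text{and}\qquad W_{\Phi_1}\succeq W_{\Phi_2}.$$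
   Context: $\preceq,\prec$ denote the Loewner order on symmetric matrices; $\lambda_1(\cdot)$ is the largest eigenvalue; $\otimes$ is the Kronecker product. Define the block matrices $\mathcal{R}_N=[\,B\ \ AB\ \cdots\ A^{N-1}B\,]\in\mathbb{R}^{n\times Nm}$, $\mathcal{O}_N=[\,(CA^{N-1})^T\ \cdots\ (CA)^T\ \ C^T\,]^T\in\mathbb{R}^{Np\times n}$, $\mathcal{O}_N^R=[\,(A^{N-1})^T\ \cdots\ A^T\ \ I_n\,]^T\in\mathbb{R}^{Nn\times n}$, $\mathcal{D}_N=I_N\otimes D$. With $H_t=CA^{t-1}B$ and $L_t=A^{t-1}B$ for $t\ge 1$, let $\mathcal{H}_N$ (size $Np\times Nm$) and $\mathcal{L}_N$ (size $Nn\times Nm$) be the block upper-triangular Toeplitz matrices whose $(i,j)$ block ($i,j=1,\dots,N$) is $H_{j-i}$, resp. $L_{j-i}$, for $j>i$ and $0$ for $j\le i$. Let $M_N=\mathcal{L}_N(I_{Nm}+\mathcal{H}_N^T(\mathcal{D}_N\mathcal{D}_N^T)^{-1}\mathcal{H}_N)^{-1}\mathcal{L}_N^T$ and $\tilde\phi_N=1/\lambda_1(M_N)$ (interpreted as $+\infty$ if $M_N=0$). For a symmetric $\Phi$ with $0\preceq\Phi\prec\tilde\phi_N I_{Nn}$ define $S_\Phi=-\Phi^{-1}+M_N$ (for invertible $\Phi$) and its inverse $S_\Phi^{-1}=-\Phi(I_{Nn}-M_N\Phi)^{-1}$ (this formula is used for all such $\Phi$, so that $S_0^{-1}=0$); $\mathcal{Q}_\Phi=[\,I_{Nm}+\mathcal{H}_N^T(\mathcal{D}_N\mathcal{D}_N^T)^{-1}\mathcal{H}_N-\mathcal{L}_N^T\Phi\mathcal{L}_N\,]^{-1}$;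 $\mathcal{J}_N=\mathcal{O}_N^R-\mathcal{L}_N\mathcal{H}_N^T[\mathcal{D}_N\mathcal{D}_N^T+\mathcal{H}_N\mathcal{H}_N^T]^{-1}\mathcal{O}_N$; $\Omega_N=\mathcal{O}_N^T(\mathcal{D}_N\mathcal{D}_N^T+\mathcal{H}_N\mathcal{H}_N^T)^{-1}\mathcal{O}_N$; $\Omega_\Phi=\Omega_N+\mathcal{J}_N^TS_\Phi^{-1}\mathcal{J}_N$ and $W_\Phi=\mathcal{R}_N\mathcal{Q}_\Phi\mathcal{R}_N^T$. *)

theory Defs
  imports "Jordan_Normal_Form.Matrix" "Jordan_Normal_Form.Gauss_Jordan_Elimination"
    "Jordan_Normal_Form.Char_Poly"
begin

(* Inverse of a square matrix (meaningful when the matrix is invertible). *)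
definition minv :: "real mat \<Rightarrow> real mat" where
  "minv X = the (mat_inverse X)"

definition psd :: "real mat \<Rightarrow> bool" where
  "psd X \<longleftrightarrow> X \<in> carrier_mat (dim_row X) (dim_row X) \<and> transpose_mat X = X \<and>
     (\<forall>v \<in> carrier_vec (dim_row X). v \<bullet> (X *\<^sub>v v) \<ge> 0)"

definition pd :: "real mat \<Rightarrow> bool" where
  "pd X \<longleftrightarrow> X \<in> carrier_mat (dim_row X) (dim_row X) \<and> transpose_mat X = X \<and>
     (\<forall>v \<in> carrier_vec (dim_row X). v \<noteq> 0\<^sub>v (dim_row X) \<longrightarrow> v \<bullet> (X *\<^sub>v v) > 0)"

definition loewner_le :: "real mat \<Rightarrow> real mat \<Rightarrow> bool" (infix "\<preceq>\<^sub>L" 50) where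
  "X \<preceq>\<^sub>L Y \<longleftrightarrow> dim_row X = dim_row Y \<and> dim_col X = dim_col Y \<and> psd (Y - X)"

definition loewner_lt :: "real mat \<Rightarrow> real mat \<Rightarrow> bool" (infix "\<prec>\<^sub>L" 50) where
  "X \<prec>\<^sub>L Y \<longleftrightarrow> dim_row X = dim_row Y \<and> dim_col X = dim_col Y \<and> pd (Y - X)"

definition lambda_max :: "real mat \<Rightarrow> real" where
  "lambda_max X = Max {k. eigenvalue X k}"

(* block matrix with R x C blocks of size rb x cb, block (i,j) (0-based) being f i j *)
definition block_mat :: "nat \<Rightarrow> nat \<Rightarrow> nat \<Rightarrow> nat \<Rightarrow> (nat \<Rightarrow> nat \<Rightarrow> real mat) \<Rightarrow> real mat" where
  "block_mat R C rb cb f = mat (R * rb) (C * cb)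
     (\<lambda>(i, j). f (i div rb) (j div cb) $$ (i mod rb, j mod cb))"

definition RN :: "real mat \<Rightarrow> real mat \<Rightarrow> nat \<Rightarrow> nat \<Rightarrow> nat \<Rightarrow> real mat" where
  "RN A B n m N = block_mat 1 N n m (\<lambda>i j. (A ^\<^sub>m j) * B)"

definition ON :: "real mat \<Rightarrow> real mat \<Rightarrow> nat \<Rightarrow> nat \<Rightarrow> nat \<Rightarrow> real mat" where
  "ON A C n p N = block_mat N 1 p n (\<lambda>i j. C * (A ^\<^sub>m (N - 1 - i)))"

definition ONR :: "real mat \<Rightarrow> nat \<Rightarrow> nat \<Rightarrow> real mat" where
  "ONR A n N = block_mat N 1 n n (\<lambda>i j. A ^\<^sub>m (N - 1 - i))"

definition DN :: "real mat \<Rightarrow> nat \<Rightarrow> nat \<Rightarrow> real mat" where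
  "DN D p N = block_mat N N p p (\<lambda>i j. if i = j then D else 0\<^sub>m p p)"

definition HN :: "real mat \<Rightarrow> real mat \<Rightarrow> real mat \<Rightarrow> nat \<Rightarrow> nat \<Rightarrow> nat \<Rightarrow> nat \<Rightarrow> real mat" where
  "HN A B C n m p N = block_mat N N p m
     (\<lambda>i j. if i < j then C * (A ^\<^sub>m (j - i - 1)) * B else 0\<^sub>m p m)"

definition LN :: "real mat \<Rightarrow> real mat \<Rightarrow> nat \<Rightarrow> nat \<Rightarrow> nat \<Rightarrow> real mat" where
  "LN A B n m N = block_mat N N n m
     (\<lambda>i j. if i < j then (A ^\<^sub>m (j - i - 1)) * B else 0\<^sub>m n m)"

definition MN :: "real mat \<Rightarrow> real mat \<Rightarrow> real mat \<Rightarrow> real mat \<Rightarrow> nat \<Rightarrow> nat \<Rightarrow> nat \<Rightarrow> nat \<Rightarrow> real mat" where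
  "MN A B C D n m p N =
     (let H = HN A B C n m p N; L = LN A B n m N; DD = DN D p N in
      L * minv (1\<^sub>m (N * m) + transpose_mat H * minv (DD * transpose_mat DD) * H) * transpose_mat L)"

(* the condition \<Phi> \<prec> phi_tilde_N I, with phi_tilde_N = 1 / lambda_1(M_N) (= +\<infinity> if M_N = 0) *)
definition below_phi_tilde :: "real mat \<Rightarrow> nat \<Rightarrow> real mat \<Rightarrow> bool" where
  "below_phi_tilde M k Phi \<longleftrightarrow>
     (if M = 0\<^sub>m k k then True else Phi \<prec>\<^sub>L ((1 / lambda_max M) \<cdot>\<^sub>m 1\<^sub>m k))"

definition SinvN :: "real mat \<Rightarrow> real mat \<Rightarrow> real mat \<Rightarrow> real mat \<Rightarrow> nat \<Rightarrow> nat \<Rightarrow> nat \<Rightarrow> nat \<Rightarrow> real mat \<Rightarrow> real mat" where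
  "SinvN A B C D n m p N Phi =
     - (Phi * minv (1\<^sub>m (N * n) - MN A B C D n m p N * Phi))"

definition QN :: "real mat \<Rightarrow> real mat \<Rightarrow> real mat \<Rightarrow> real mat \<Rightarrow> nat \<Rightarrow> nat \<Rightarrow> nat \<Rightarrow> nat \<Rightarrow> real mat \<Rightarrow> real mat" where
  "QN A B C D n m p N Phi =
     (let H = HN A B C n m p N; L = LN A B n m N; DD = DN D p N in
      minv (1\<^sub>m (N * m) + transpose_mat H * minv (DD * transpose_mat DD) * H
            - transpose_mat L * Phi * L))"

definition JN :: "real mat \<Rightarrow> real mat \<Rightarrow> real mat \<Rightarrow> real mat \<Rightarrow> nat \<Rightarrow> nat \<Rightarrow> nat \<Rightarrow> nat \<Rightarrow> real mat" where
  "JN A B C D n m p N =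
     (let H = HN A B C n m p N; L = LN A B n m N; DD = DN D p N in
      ONR A n N - L * transpose_mat H * minv (DD * transpose_mat DD + H * transpose_mat H) * ON A C n p N)"

definition OmegaN :: "real mat \<Rightarrow> real mat \<Rightarrow> real mat \<Rightarrow> real mat \<Rightarrow> nat \<Rightarrow> nat \<Rightarrow> nat \<Rightarrow> nat \<Rightarrow> real mat" where
  "OmegaN A B C D n m p N =
     (let H = HN A B C n m p N; DD = DN D p N; Ob = ON A C n p N in
      transpose_mat Ob * minv (DD * transpose_mat DD + H * transpose_mat H) * Ob)"

definition OmegaPhi :: "real mat \<Rightarrow> real mat \<Rightarrow> real mat \<Rightarrow> real mat \<Rightarrow> nat \<Rightarrow> nat \<Rightarrow> nat \<Rightarrow> nat \<Rightarrow> real mat \<Rightarrow> real mat" where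
  "OmegaPhi A B C D n m p N Phi =
     OmegaN A B C D n m p N
     + transpose_mat (JN A B C D n m p N) * SinvN A B C D n m p N Phi * JN A B C D n m p N"

definition WPhi :: "real mat \<Rightarrow> real mat \<Rightarrow> real mat \<Rightarrow> real mat \<Rightarrow> nat \<Rightarrow> nat \<Rightarrow> nat \<Rightarrow> nat \<Rightarrow> real mat \<Rightarrow> real mat" where
  "WPhi A B C D n m p N Phi =
     RN A B n m N * QN A B C D n m p N Phi * transpose_mat (RN A B n m N)"

end

theory Submission
  imports Defs
begin


lemma self_sp_ge0: "(v::real vec) \<bullet> v \<ge> 0"
  unfolding scalar_prod_def by (auto intro: sum_nonneg)

lemma self_sp_eq0: assumes "(v::real vec) \<in> carrier_vec d" "v \<bullet> v = 0" shows "v = 0\<^sub>v d"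
proof -
  have "\<forall>i\<in>{0..<dim_vec v}. v $ i * v $ i = 0"
    using assms(2) unfolding scalar_prod_def
    by (subst sum_nonneg_eq_0_iff[symmetric]) auto
  then show ?thesis using assms(1) by (intro eq_vecI) auto
qed

lemma self_sp_gt0: assumes "(v::real vec) \<in> carrier_vec d" "v \<noteq> 0\<^sub>v d" shows "v \<bullet> v > 0"
  using self_sp_ge0[of v] self_sp_eq0[OF assms(1)] assms(2) by fastforce

lemma minv_props: assumes X: "(X::real mat) \<in> carrier_mat d d"
  and inj: "\<And>v. v \<in> carrier_vec d \<Longrightarrow> X *\<^sub>v v = 0\<^sub>v d \<Longrightarrow> v = 0\<^sub>v d"
  shows "X * minv X = 1\<^sub>m d" "minv X * X = 1\<^sub>m d" "minv X \<in> carrier_mat d d"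
proof -
  have "det X \<noteq> 0" using det_0_iff_vec_prod_zero[OF X] inj by auto
  from det_non_zero_imp_unit[OF X this] have U: "X \<in> Units (ring_mat TYPE(real) d d)" .
  have "mat_inverse X \<noteq> None" using mat_inverse(1)[OF X, of d] U by blast
  then obtain B where B: "mat_inverse X = Some B" by auto
  have mb: "minv X = B" unfolding minv_def B by simp
  show "X * minv X = 1\<^sub>m d" "minv X * X = 1\<^sub>m d" "minv X \<in> carrier_mat d d"
    using mat_inverse(2)[OF X B] mb by auto
qed

lemma sym_form: assumes "(X::real mat) \<in> carrier_mat d d" "transpose_mat X = X"
  "x \<in> carrier_vec d" "y \<in> carrier_vec d"
  shows "y \<bullet> (X *\<^sub>v x) = x \<bullet> (X *\<^sub>v y)"
proof -
  have "y \<bullet> (X *\<^sub>v x) = (transpose_mat X *\<^sub>v y) \<bullet> x"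
    using transpose_vec_mult_scalar[OF assms(1,3,4)] by simp
  also have "\<dots> = x \<bullet> (X *\<^sub>v y)" using assms by (subst comm_scalar_prod[of _ d]) auto
  finally show ?thesis .
qed

lemma transp_form: assumes "(X::real mat) \<in> carrier_mat r c"
  "x \<in> carrier_vec c" "y \<in> carrier_vec r"
  shows "y \<bullet> (X *\<^sub>v x) = (transpose_mat X *\<^sub>v y) \<bullet> x"
  using transpose_vec_mult_scalar[OF assms] by simp

lemma unit_form: assumes "(X::real mat) \<in> carrier_mat d d" "i < d" "j < d"
  shows "unit_vec d i \<bullet> (X *\<^sub>v unit_vec d j) = X $$ (i,j)"
proof -
  have "unit_vec d i \<bullet> (X *\<^sub>v unit_vec d j) = (X *\<^sub>v unit_vec d j) $ i"
    using assms by (subst scalar_prod_left_unit) auto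
  also have "\<dots> = row X i \<bullet> unit_vec d j" using assms by auto
  also have "\<dots> = X $$ (i,j)" using assms by (subst scalar_prod_right_unit) auto
  finally show ?thesis .
qed

lemma sym_from_forms: assumes X: "(X::real mat) \<in> carrier_mat d d"
  and f: "\<And>x y. x \<in> carrier_vec d \<Longrightarrow> y \<in> carrier_vec d \<Longrightarrow> y \<bullet> (X *\<^sub>v x) = x \<bullet> (X *\<^sub>v y)"
  shows "transpose_mat X = X"
proof (rule eq_matI)
  fix i j assume "i < dim_row X" "j < dim_col X"
  then have ij: "i < d" "j < d" using X by auto
  show "transpose_mat X $$ (i, j) = X $$ (i, j)"
    using ij X f[of "unit_vec d j" "unit_vec d i"] unit_form[OF X, of i j] unit_form[OF X, of j i]
    by auto
qed (use X in auto)

lemma loewner_le_forms: assumes X: "(X::real mat) \<in> carrier_mat d d" and Y: "Y \<in> carrier_mat d d"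
  and f: "\<And>x y. x \<in> carrier_vec d \<Longrightarrow> y \<in> carrier_vec d \<Longrightarrow>
        y \<bullet> (Y *\<^sub>v x) - y \<bullet> (X *\<^sub>v x) = x \<bullet> (Y *\<^sub>v y) - x \<bullet> (X *\<^sub>v y)"
  and q: "\<And>v. v \<in> carrier_vec d \<Longrightarrow> v \<bullet> (X *\<^sub>v v) \<le> v \<bullet> (Y *\<^sub>v v)"
  shows "X \<preceq>\<^sub>L Y"
proof -
  have YX: "Y - X \<in> carrier_mat d d" using X Y by auto
  have e: "\<And>x y. x \<in> carrier_vec d \<Longrightarrow> y \<in> carrier_vec d \<Longrightarrow>
     y \<bullet> ((Y - X) *\<^sub>v x) = y \<bullet> (Y *\<^sub>v x) - y \<bullet> (X *\<^sub>v x)"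
    using X Y by (simp add: minus_mult_distrib_mat_vec[of _ d d] scalar_prod_minus_distrib[of _ d])
  have "transpose_mat (Y - X) = Y - X"
    by (rule sym_from_forms[OF YX]) (simp add: e f)
  moreover have "\<forall>v\<in>carrier_vec d. v \<bullet> ((Y - X) *\<^sub>v v) \<ge> 0" using e q by auto
  ultimately show ?thesis unfolding loewner_le_def psd_def using X Y by auto
qed



lemma quad_expand: assumes B: "(B::real mat) \<in> carrier_mat d d" and x: "x \<in> carrier_vec d" and y: "y \<in> carrier_vec d"
  shows "(y + t \<cdot>\<^sub>v x) \<bullet> (B *\<^sub>v (y + t \<cdot>\<^sub>v x)) = y \<bullet> (B *\<^sub>v y) + t * (y \<bullet> (B *\<^sub>v x)) + t * (x \<bullet> (B *\<^sub>v y)) + t^2 * (x \<bullet> (B *\<^sub>v x))"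
  using B x y
  by (simp add: mult_add_distrib_mat_vec[of _ d d] mult_mat_vec[of _ d d] add_scalar_prod_distrib[of _ d]
      scalar_prod_add_distrib[of _ d] power2_eq_square algebra_simps)

lemma cs_form: assumes B: "(B::real mat) \<in> carrier_mat d d" and s: "transpose_mat B = B"
  and p: "\<And>v. v \<in> carrier_vec d \<Longrightarrow> v \<bullet> (B *\<^sub>v v) \<ge> 0"
  and x: "x \<in> carrier_vec d" and y: "y \<in> carrier_vec d"
  shows "(y \<bullet> (B *\<^sub>v x))^2 \<le> (y \<bullet> (B *\<^sub>v y)) * (x \<bullet> (B *\<^sub>v x))"
proof -
  define a where "a = x \<bullet> (B *\<^sub>v x)"
  define b where "b = y \<bullet> (B *\<^sub>v x)"
  define c where "c = y \<bullet> (B *\<^sub>v y)"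
  have sb: "x \<bullet> (B *\<^sub>v y) = b" unfolding b_def using sym_form[OF B s x y] by simp
  have T: "\<And>t. c + 2 * t * b + t^2 * a \<ge> 0"
  proof -
    fix t
    have "0 \<le> (y + t \<cdot>\<^sub>v x) \<bullet> (B *\<^sub>v (y + t \<cdot>\<^sub>v x))" using p x y by auto
    also have "\<dots> = c + 2 * t * b + t^2 * a" unfolding quad_expand[OF B x y] a_def c_def sb b_def[symmetric]
      by simp
    finally show "c + 2 * t * b + t^2 * a \<ge> 0" .
  qed
  have a0: "a \<ge> 0" unfolding a_def using p x by auto
  show ?thesis unfolding a_def[symmetric] b_def[symmetric] c_def[symmetric]
  proof (cases "a = 0")
    case True
    have "b = 0"
    proof (rule ccontr)
      assume "b \<noteq> 0"
      have "c + 2 * (-(c+1)/(2*b)) * b + (-(c+1)/(2*b))^2 * a \<ge> 0" by (rule T)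
      with True \<open>b \<noteq> 0\<close> show False by (simp add: field_simps)
    qed
    with True show "b^2 \<le> c * a" by simp
  next
    case False
    with a0 have a: "a > 0" by simp
    have "c + 2 * (-b/a) * b + (-b/a)^2 * a \<ge> 0" by (rule T)
    then have "c - b^2/a \<ge> 0" using a by (simp add: field_simps power2_eq_square)
    then show "b^2 \<le> c * a" using a by (simp add: field_simps)
  qed
qed

lemma cs_vec: assumes x: "(x::real vec) \<in> carrier_vec d" and y: "y \<in> carrier_vec d"
  shows "(y \<bullet> x)^2 \<le> (y \<bullet> y) * (x \<bullet> x)"
  using cs_form[of "1\<^sub>m d" d x y] x y self_sp_ge0 by auto

definition fro :: "real mat \<Rightarrow> real" where
  "fro A = (\<Sum>i<dim_row A. row A i \<bullet> row A i)"

lemma fro_nonneg: "fro A \<ge> 0" unfolding fro_def by (auto intro: sum_nonneg self_sp_ge0)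

lemma fro_bound: assumes A: "(A::real mat) \<in> carrier_mat r c" and v: "v \<in> carrier_vec c"
  shows "(A *\<^sub>v v) \<bullet> (A *\<^sub>v v) \<le> fro A * (v \<bullet> v)"
proof -
  have "(A *\<^sub>v v) \<bullet> (A *\<^sub>v v) = (\<Sum>i<r. (row A i \<bullet> v)^2)"
    using A v unfolding scalar_prod_def[of "A *\<^sub>v v"] by (auto simp: power2_eq_square lessThan_atLeast0)
  also have "\<dots> \<le> (\<Sum>i<r. (row A i \<bullet> row A i) * (v \<bullet> v))"
    by (rule sum_mono, rule cs_vec[of _ c], use A v in auto)
  also have "\<dots> = fro A * (v \<bullet> v)" unfolding fro_def using A by (simp add: sum_distrib_right)
  finally show ?thesis .
qed

lemma loewner_inv: assumes X: "(X::real mat) \<in> carrier_mat d d" and Y: "Y \<in> carrier_mat d d"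
  and sX: "transpose_mat X = X" and sY: "transpose_mat Y = Y"
  and pX: "\<And>v. v \<in> carrier_vec d \<Longrightarrow> v \<bullet> (X *\<^sub>v v) \<ge> 0"
  and XY: "\<And>v. v \<in> carrier_vec d \<Longrightarrow> v \<bullet> (X *\<^sub>v v) \<le> v \<bullet> (Y *\<^sub>v v)"
  and iX: "X * Xi = 1\<^sub>m d" and Xi: "Xi \<in> carrier_mat d d"
  and iY: "Y * Yi = 1\<^sub>m d" and Yi: "Yi \<in> carrier_mat d d"
  and v: "v \<in> carrier_vec d"
  shows "v \<bullet> (Yi *\<^sub>v v) \<le> v \<bullet> (Xi *\<^sub>v v)"
proof -
  define a where "a = Yi *\<^sub>v v"
  define b where "b = Xi *\<^sub>v v"
  have a: "a \<in> carrier_vec d" and b: "b \<in> carrier_vec d" using Xi Yi v unfolding a_def b_def by auto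
  have Ya: "Y *\<^sub>v a = v" unfolding a_def using Y Yi v iY
    by (simp add: assoc_mult_mat_vec[symmetric, of _ d d _ d])
  have Xb: "X *\<^sub>v b = v" unfolding b_def using X Xi v iX
    by (simp add: assoc_mult_mat_vec[symmetric, of _ d d _ d])
  have "0 \<le> (a + (-1) \<cdot>\<^sub>v b) \<bullet> (X *\<^sub>v (a + (-1) \<cdot>\<^sub>v b))" using pX a b by auto
  also have "\<dots> = a \<bullet> (X *\<^sub>v a) - 2 * (a \<bullet> v) + b \<bullet> v"
    unfolding quad_expand[OF X b a] sym_form[OF X sX a b] Xb by simp
  finally have 1: "2 * (a \<bullet> v) - a \<bullet> (X *\<^sub>v a) \<le> b \<bullet> v" by simp
  have 2: "a \<bullet> (X *\<^sub>v a) \<le> a \<bullet> v" using XY[OF a] Ya by simp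
  have "v \<bullet> (Yi *\<^sub>v v) = a \<bullet> v" unfolding a_def[symmetric] using a v by (simp add: comm_scalar_prod[of _ d])
  also have "\<dots> \<le> b \<bullet> v" using 1 2 by simp
  also have "\<dots> = v \<bullet> (Xi *\<^sub>v v)" unfolding b_def[symmetric] using b v by (simp add: comm_scalar_prod[of _ d])
  finally show ?thesis .
qed



lemma smult_form: assumes "(M::real mat) \<in> carrier_mat d d" "w \<in> carrier_vec d"
  shows "(t \<cdot>\<^sub>v w) \<bullet> (M *\<^sub>v (t \<cdot>\<^sub>v w)) = t^2 * (w \<bullet> (M *\<^sub>v w))"
  using assms by (simp add: mult_mat_vec[of _ d d] power2_eq_square)

lemma smult_mat_vec: assumes "(A::real mat) \<in> carrier_mat r c" "v \<in> carrier_vec c"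
  shows "(a \<cdot>\<^sub>m A) *\<^sub>v v = a \<cdot>\<^sub>v (A *\<^sub>v v)"
  using assms by (intro eq_vecI) (auto simp: scalar_prod_def sum_distrib_left algebra_simps)

lemma transpose_smult_one: "transpose_mat (a \<cdot>\<^sub>m 1\<^sub>m d) = (a::real) \<cdot>\<^sub>m 1\<^sub>m d"
  by (rule eq_matI) auto

lemma eigenvalues_finite: assumes M: "(M::real mat) \<in> carrier_mat d d"
  shows "finite {k. eigenvalue M k}"
proof -
  have "char_poly M \<noteq> 0" using degree_monic_char_poly[OF M] by auto
  then have "finite {k. poly (char_poly M) k = 0}" by (rule poly_roots_finite)
  then show ?thesis using eigenvalue_root_char_poly[OF M] by simp
qed

lemma spec_bound: assumes M: "(M::real mat) \<in> carrier_mat d d" and s: "transpose_mat M = M"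
  and d: "d > 0"
  shows "\<forall>w \<in> carrier_vec d. w \<bullet> (M *\<^sub>v w) \<le> lambda_max M * (w \<bullet> w)"
proof -
  define S where "S = {w \<bullet> (M *\<^sub>v w) | w. w \<in> carrier_vec d \<and> w \<bullet> w = 1}"
  define e :: "real vec" where "e = unit_vec d 0"
  have e: "e \<in> carrier_vec d" "e \<bullet> e = 1" unfolding e_def using d by auto
  have Sne: "S \<noteq> {}" unfolding S_def using e by auto
  have bnd: "\<And>w::real vec. w \<in> carrier_vec d \<Longrightarrow> w \<bullet> w = 1 \<Longrightarrow> w \<bullet> (M *\<^sub>v w) \<le> 1 + fro M"
  proof -
    fix w :: "real vec" assume w: "w \<in> carrier_vec d" "w \<bullet> w = 1"
    have "(w \<bullet> (M *\<^sub>v w))^2 \<le> (w \<bullet> w) * ((M *\<^sub>v w) \<bullet> (M *\<^sub>v w))"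
      using cs_vec[of "M *\<^sub>v w" d w] w M by auto
    also have "\<dots> \<le> fro M" using fro_bound[OF M w(1)] w by simp
    finally have sq: "(w \<bullet> (M *\<^sub>v w))^2 \<le> fro M" .
    show "w \<bullet> (M *\<^sub>v w) \<le> 1 + fro M"
    proof (rule ccontr)
      assume "\<not> ?thesis"
      then have "w \<bullet> (M *\<^sub>v w) > 1 + fro M" by simp
      moreover have "fro M \<ge> 0" by (rule fro_nonneg)
      ultimately have t1: "w \<bullet> (M *\<^sub>v w) > 1" "w \<bullet> (M *\<^sub>v w) > fro M" by linarith+
      have "(w \<bullet> (M *\<^sub>v w)) * (w \<bullet> (M *\<^sub>v w)) > (w \<bullet> (M *\<^sub>v w)) * 1"
        using t1 by (intro mult_strict_left_mono) auto
      then have "(w \<bullet> (M *\<^sub>v w))^2 > fro M" using t1 unfolding power2_eq_square by linarith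
      with sq show False by simp
    qed
  qed
  have bdd: "bdd_above S" unfolding S_def bdd_above_def using bnd by blast
  define mu where "mu = Sup S"
  have le_mu: "\<And>w::real vec. w \<in> carrier_vec d \<Longrightarrow> w \<bullet> w = 1 \<Longrightarrow> w \<bullet> (M *\<^sub>v w) \<le> mu"
    unfolding mu_def by (rule cSup_upper[OF _ bdd], auto simp: S_def)
  have ray: "\<And>w::real vec. w \<in> carrier_vec d \<Longrightarrow> w \<bullet> (M *\<^sub>v w) \<le> mu * (w \<bullet> w)"
  proof -
    fix w :: "real vec" assume w: "w \<in> carrier_vec d"
    show "w \<bullet> (M *\<^sub>v w) \<le> mu * (w \<bullet> w)"
    proof (cases "w = 0\<^sub>v d")
      case True then show ?thesis using M by simp
    next
      case False
      have pos: "w \<bullet> w > 0" using self_sp_gt0[OF w False] .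
      define t where "t = 1 / sqrt (w \<bullet> w)"
      have t2: "t^2 = 1 / (w \<bullet> w)" unfolding t_def using pos by (simp add: power_divide)
      have "(t \<cdot>\<^sub>v w) \<bullet> (t \<cdot>\<^sub>v w) = t^2 * (w \<bullet> w)" using w by (simp add: power2_eq_square)
      also have "\<dots> = 1" using t2 pos by simp
      finally have u: "(t \<cdot>\<^sub>v w) \<bullet> (t \<cdot>\<^sub>v w) = 1" .
      have "t^2 * (w \<bullet> (M *\<^sub>v w)) \<le> mu" using le_mu[of "t \<cdot>\<^sub>v w"] u w smult_form[OF M w] by simp
      then have "(w \<bullet> (M *\<^sub>v w)) / (w \<bullet> w) \<le> mu" using t2 by simp
      then show ?thesis using pos by (simp add: field_simps)
    qed
  qed
  have ev: "eigenvalue M mu"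
  proof (rule ccontr)
    assume nev: "\<not> eigenvalue M mu"
    define Q where "Q = mu \<cdot>\<^sub>m 1\<^sub>m d - M"
    have Q: "Q \<in> carrier_mat d d" unfolding Q_def using M by auto
    have Qv: "\<And>v::real vec. v \<in> carrier_vec d \<Longrightarrow> Q *\<^sub>v v = mu \<cdot>\<^sub>v v - M *\<^sub>v v"
      unfolding Q_def using M by (simp add: minus_mult_distrib_mat_vec[of _ d d] smult_mat_vec[of _ d d])
    have Qf: "\<And>v. v \<in> carrier_vec d \<Longrightarrow> v \<bullet> (Q *\<^sub>v v) = mu * (v \<bullet> v) - v \<bullet> (M *\<^sub>v v)"
      using Qv M by (simp add: scalar_prod_minus_distrib[of _ d])
    have Qp: "\<And>v. v \<in> carrier_vec d \<Longrightarrow> v \<bullet> (Q *\<^sub>v v) \<ge> 0"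
    proof -
      fix v :: "real vec" assume v: "v \<in> carrier_vec d"
      show "v \<bullet> (Q *\<^sub>v v) \<ge> 0" using Qf[OF v] ray[OF v] by simp
    qed
    have sQ: "transpose_mat Q = Q"
    proof (rule sym_from_forms[OF Q])
      fix x y :: "real vec" assume xy: "x \<in> carrier_vec d" "y \<in> carrier_vec d"
      have "y \<bullet> (Q *\<^sub>v x) = mu * (y \<bullet> x) - y \<bullet> (M *\<^sub>v x)"
        using Qv[OF xy(1)] xy M by (simp add: scalar_prod_minus_distrib[of _ d])
      also have "\<dots> = mu * (x \<bullet> y) - x \<bullet> (M *\<^sub>v y)"
      proof -
        have e1: "y \<bullet> x = x \<bullet> y" by (rule comm_scalar_prod[OF xy(2,1)])
        have e2: "y \<bullet> (M *\<^sub>v x) = x \<bullet> (M *\<^sub>v y)" by (rule sym_form[OF M s xy])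
        show ?thesis by (subst e1, subst e2, rule refl)
      qed
      also have "\<dots> = x \<bullet> (Q *\<^sub>v y)"
        using Qv[OF xy(2)] xy M by (simp add: scalar_prod_minus_distrib[of _ d])
      finally show "y \<bullet> (Q *\<^sub>v x) = x \<bullet> (Q *\<^sub>v y)" .
    qed
    have inj: "\<And>v::real vec. v \<in> carrier_vec d \<Longrightarrow> Q *\<^sub>v v = 0\<^sub>v d \<Longrightarrow> v = 0\<^sub>v d"
    proof (rule ccontr)
      fix v :: "real vec" assume v: "v \<in> carrier_vec d" "Q *\<^sub>v v = 0\<^sub>v d" "v \<noteq> 0\<^sub>v d"
      have "M *\<^sub>v v = mu \<cdot>\<^sub>v v"
      proof -
        have "mu \<cdot>\<^sub>v v - M *\<^sub>v v = 0\<^sub>v d" using Qv v by simp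
        note h = this
        show ?thesis
        proof (rule eq_vecI)
          fix i assume "i < dim_vec (mu \<cdot>\<^sub>v v)"
          then have i: "i < d" using v by simp
          have "(mu \<cdot>\<^sub>v v - M *\<^sub>v v) $ i = 0" using h i by simp
          then show "(M *\<^sub>v v) $ i = (mu \<cdot>\<^sub>v v) $ i" using i v M by simp
        qed (use v M in simp)
      qed
      then have "eigenvalue M mu" unfolding eigenvalue_def eigenvector_def using v M by auto
      with nev show False by simp
    qed
    define Ri where "Ri = minv Q"
    have Ri: "Ri \<in> carrier_mat d d" "Ri * Q = 1\<^sub>m d" unfolding Ri_def using minv_props[OF Q inj] by auto
    define G where "G = 1 + fro Q"
    have key: "\<And>w::real vec. w \<in> carrier_vec d \<Longrightarrow> w \<bullet> w = 1 \<Longrightarrow> 1 \<le> fro Ri * G * (w \<bullet> (Q *\<^sub>v w))"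
    proof -
      fix w :: "real vec" assume w: "w \<in> carrier_vec d" "w \<bullet> w = 1"
      define y where "y = Q *\<^sub>v w"
      have y: "y \<in> carrier_vec d" unfolding y_def using Q w by auto
      have "w = Ri *\<^sub>v y" unfolding y_def using Ri Q w
        by (simp add: assoc_mult_mat_vec[symmetric, of _ d d _ d])
      then have "w \<bullet> w \<le> fro Ri * (y \<bullet> y)" using fro_bound[OF Ri(1) y] by simp
      then have 1: "1 \<le> fro Ri * (y \<bullet> y)" using w by simp
      have "(y \<bullet> (Q *\<^sub>v y))^2 \<le> (y \<bullet> y) * ((Q *\<^sub>v y) \<bullet> (Q *\<^sub>v y))"
        using cs_vec[of "Q *\<^sub>v y" d y] y Q by auto
      also have "\<dots> \<le> (y \<bullet> y) * (fro Q * (y \<bullet> y))"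
        using fro_bound[OF Q y] self_sp_ge0[of y] by (simp add: mult_left_mono)
      finally have a: "(y \<bullet> (Q *\<^sub>v y))^2 \<le> fro Q * (y \<bullet> y)^2" by (simp add: power2_eq_square mult.commute mult.left_commute)
      have yQy: "y \<bullet> (Q *\<^sub>v y) \<le> G * (y \<bullet> y)"
      proof (rule ccontr)
        assume "\<not> ?thesis"
        then have gt: "y \<bullet> (Q *\<^sub>v y) > G * (y \<bullet> y)" by simp
        have G1: "G \<ge> 1" unfolding G_def using fro_nonneg[of Q] by simp
        have yy: "y \<bullet> y \<ge> 0" by (rule self_sp_ge0)
        have "G * (y \<bullet> y) \<ge> 0" using G1 yy by simp
        then have "(y \<bullet> (Q *\<^sub>v y))^2 > (G * (y \<bullet> y))^2" using gt
          by (simp add: power_strict_mono)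
        moreover have "(G * (y \<bullet> y))^2 \<ge> fro Q * (y \<bullet> y)^2"
        proof -
          have "G^2 \<ge> fro Q" unfolding G_def using fro_nonneg[of Q] by (simp add: power2_eq_square algebra_simps)
          then show ?thesis using yy by (simp add: power_mult_distrib mult_right_mono)
        qed
        ultimately show False using a by simp
      qed
      have b: "(y \<bullet> y)^2 \<le> (y \<bullet> (Q *\<^sub>v y)) * (w \<bullet> (Q *\<^sub>v w))"
        using cs_form[OF Q sQ Qp w(1) y] unfolding y_def by simp
      have ypos: "y \<bullet> y > 0" using 1 self_sp_ge0[of y] by (cases "y \<bullet> y = 0") auto
      have wq: "w \<bullet> (Q *\<^sub>v w) \<ge> 0" using Qp w by simp
      have "(y \<bullet> y)^2 \<le> G * (y \<bullet> y) * (w \<bullet> (Q *\<^sub>v w))"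
        using order_trans[OF b mult_right_mono[OF yQy wq]] .
      then have "y \<bullet> y \<le> G * (w \<bullet> (Q *\<^sub>v w))" using ypos by (simp add: power2_eq_square)
      then have "fro Ri * (y \<bullet> y) \<le> fro Ri * (G * (w \<bullet> (Q *\<^sub>v w)))"
        using fro_nonneg[of Ri] by (simp add: mult_left_mono)
      then show "1 \<le> fro Ri * G * (w \<bullet> (Q *\<^sub>v w))" using 1 by simp
    qed
    have cpos: "fro Ri * G > 0"
    proof -
      have "1 \<le> fro Ri * G * (e \<bullet> (Q *\<^sub>v e))" using key e by simp
      moreover have "fro Ri * G \<ge> 0" unfolding G_def using fro_nonneg[of Ri] fro_nonneg[of Q] by simp
      ultimately show ?thesis by (metis less_eq_real_def mult_eq_0_iff not_one_le_zero)
    qed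
    define eps where "eps = 1 / (fro Ri * G)"
    have epos: "eps > 0" unfolding eps_def using cpos by simp
    have "\<And>s. s \<in> S \<Longrightarrow> s \<le> mu - eps"
    proof -
      fix s assume "s \<in> S"
      then obtain w where w: "w \<in> carrier_vec d" "w \<bullet> w = 1" "s = w \<bullet> (M *\<^sub>v w)" unfolding S_def by auto
      have "1 \<le> fro Ri * G * (w \<bullet> (Q *\<^sub>v w))" using key w by simp
      then have "eps \<le> w \<bullet> (Q *\<^sub>v w)" unfolding eps_def using cpos by (simp add: field_simps)
      then show "s \<le> mu - eps" using Qf[OF w(1)] w by simp
    qed
    then have "Sup S \<le> mu - eps" using Sne by (intro cSup_least) auto
    then show False using epos unfolding mu_def by simp
  qed
  have "mu \<le> lambda_max M" unfolding lambda_max_def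
    using eigenvalues_finite[OF M] ev by (intro Max_ge) auto
  then show ?thesis using ray order_trans[OF ray mult_right_mono[OF _ self_sp_ge0]] by blast
qed



lemma block_carrier: "block_mat R C rb cb f \<in> carrier_mat (R*rb) (C*cb)"
  unfolding block_mat_def by simp

lemma block_index: "i < R*rb \<Longrightarrow> j < C*cb \<Longrightarrow>
  block_mat R C rb cb f $$ (i,j) = f (i div rb) (j div cb) $$ (i mod rb, j mod cb)"
  unfolding block_mat_def by simp

lemma DN_pd: assumes D: "D \<in> carrier_mat p p" and p: "p > 0"
  and pdD: "0\<^sub>m p p \<prec>\<^sub>L D * transpose_mat D"
  and x: "x \<in> carrier_vec (N*p)" and x0: "x \<noteq> 0\<^sub>v (N*p)"
  shows "x \<bullet> ((DN D p N * transpose_mat (DN D p N)) *\<^sub>v x) > 0"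
proof -
  define DD where "DD = DN D p N"
  have DD: "DD \<in> carrier_mat (N*p) (N*p)" unfolding DD_def DN_def using block_carrier by auto
  have DDe: "\<And>k j. k < N*p \<Longrightarrow> j < N*p \<Longrightarrow> DD $$ (k,j) = (if k div p = j div p then D $$ (k mod p, j mod p) else 0)"
    unfolding DD_def DN_def using p by (subst block_index) auto
  have pdD': "\<And>y. y \<in> carrier_vec p \<Longrightarrow> y \<noteq> 0\<^sub>v p \<Longrightarrow> y \<bullet> ((D * transpose_mat D) *\<^sub>v y) > 0"
  proof -
    fix y :: "real vec" assume y: "y \<in> carrier_vec p" "y \<noteq> 0\<^sub>v p"
    have "pd (D * transpose_mat D - 0\<^sub>m p p)" using pdD unfolding loewner_lt_def by auto
    moreover have "D * transpose_mat D - 0\<^sub>m p p = D * transpose_mat D" using D by (intro eq_matI) auto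
    ultimately show "y \<bullet> ((D * transpose_mat D) *\<^sub>v y) > 0" unfolding pd_def using y D by auto
  qed
  have "\<exists>k<N*p. x $ k \<noteq> 0"
  proof (rule ccontr)
    assume "\<not> ?thesis"
    then have "x = 0\<^sub>v (N*p)" using x by (intro eq_vecI) auto
    with x0 show False by simp
  qed
  then obtain k0 where k0: "k0 < N*p" "x $ k0 \<noteq> 0" by blast
  define i0 where "i0 = k0 div p"
  have i0: "i0 < N" unfolding i0_def using k0(1) p by (simp add: div_less_iff_less_mult)
  define y where "y = vec p (\<lambda>s. x $ (i0*p + s))"
  have y: "y \<in> carrier_vec p" unfolding y_def by simp
  have "y $ (k0 mod p) = x $ k0" unfolding y_def i0_def using p by simp
  then have y0: "y \<noteq> 0\<^sub>v p" using k0 p by auto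
  define z where "z = transpose_mat D *\<^sub>v y"
  have z: "z \<in> carrier_vec p" unfolding z_def using D y by auto
  have "y \<bullet> (D *\<^sub>v z) > 0" unfolding z_def using pdD'[OF y y0] D y by simp
  moreover have "y \<bullet> (D *\<^sub>v z) = z \<bullet> z" unfolding z_def using transp_form[OF D _ y, of "transpose_mat D *\<^sub>v y"] D y by simp
  ultimately have "z \<noteq> 0\<^sub>v p" using z by auto
  note z0 = this
  have "\<exists>r<p. z $ r \<noteq> 0"
  proof (rule ccontr)
    assume "\<not> ?thesis"
    then have "z = 0\<^sub>v p" using z by (intro eq_vecI) auto
    with z0 show False by simp
  qed
  then obtain r where r: "r < p" "z $ r \<noteq> 0" by blast
  define w where "w = transpose_mat DD *\<^sub>v x"
  have w: "w \<in> carrier_vec (N*p)" unfolding w_def using DD x by auto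
  have ip: "i0*p + p \<le> N*p"
  proof -
    have "i0*p + p = (i0+1)*p" by simp
    also have "\<dots> \<le> N*p" using i0 by (intro mult_right_mono) auto
    finally show ?thesis .
  qed
  have ir: "i0*p + r < N*p" using ip r by linarith
  have "w $ (i0*p + r) = (\<Sum>k\<in>{0..<N*p}. DD $$ (k, i0*p+r) * x $ k)"
    unfolding w_def using DD x ir by (simp add: scalar_prod_def)
  also have "\<dots> = (\<Sum>k\<in>{0..<N*p}. (if k div p = i0 then D $$ (k mod p, r) * x $ k else 0))"
    using ir p r by (intro sum.cong refl) (simp add: DDe)
  also have "\<dots> = (\<Sum>k\<in>{i0*p..<i0*p+p}. (if k div p = i0 then D $$ (k mod p, r) * x $ k else 0))"
  proof (rule sum.mono_neutral_right)
    show "{i0*p..<i0*p+p} \<subseteq> {0..<N*p}" using ip by auto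
    show "\<forall>k\<in>{0..<N*p} - {i0*p..<i0*p+p}. (if k div p = i0 then D $$ (k mod p, r) * x $ k else 0) = 0"
    proof
      fix k assume "k \<in> {0..<N*p} - {i0*p..<i0*p+p}"
      then have "k < i0*p \<or> k \<ge> i0*p+p" by auto
      moreover have "k div p = i0 \<Longrightarrow> i0*p \<le> k \<and> k < i0*p+p"
      proof -
        assume e: "k div p = i0"
        have "i0 * p + k mod p = k" using div_mult_mod_eq[of k p] e by simp
        moreover have "k mod p < p" using p by simp
        ultimately show ?thesis by linarith
      qed
      ultimately have "k div p \<noteq> i0" by linarith
      then show "(if k div p = i0 then D $$ (k mod p, r) * x $ k else 0) = 0" by simp
    qed
  qed simp
  also have "\<dots> = (\<Sum>s\<in>{0..<p}. (if (s + i0*p) div p = i0 then D $$ ((s + i0*p) mod p, r) * x $ (s + i0*p) else 0))"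
    using sum.shift_bounds_nat_ivl[of "\<lambda>k. (if k div p = i0 then D $$ (k mod p, r) * x $ k else 0)" 0 "i0*p" p]
    by (simp add: add.commute)
  also have "\<dots> = (\<Sum>s\<in>{0..<p}. D $$ (s, r) * x $ (i0*p + s))"
    using p by (intro sum.cong refl) (simp add: add.commute)
  also have "\<dots> = z $ r" unfolding z_def y_def using D r by (simp add: scalar_prod_def)
  finally have "w $ (i0*p + r) \<noteq> 0" using r by simp
  then have w0: "w \<noteq> 0\<^sub>v (N*p)" using ir by auto
  have "x \<bullet> ((DD * transpose_mat DD) *\<^sub>v x) = x \<bullet> (DD *\<^sub>v w)"
    unfolding w_def using DD x by (simp add: assoc_mult_mat_vec[of _ "N*p" "N*p" _ "N*p"])
  also have "\<dots> = w \<bullet> w" unfolding w_def using transp_form[OF DD _ x, of "transpose_mat DD *\<^sub>v x"] DD x by simp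
  finally show ?thesis using self_sp_gt0[OF w w0] unfolding DD_def by simp
qed



lemma congr_form: assumes T: "(T::real mat) \<in> carrier_mat c r" and S: "S \<in> carrier_mat c c"
  and x: "x \<in> carrier_vec r" and y: "y \<in> carrier_vec r"
  shows "y \<bullet> ((transpose_mat T * S * T) *\<^sub>v x) = (T *\<^sub>v y) \<bullet> (S *\<^sub>v (T *\<^sub>v x))"
proof -
  have "(transpose_mat T * S * T) *\<^sub>v x = transpose_mat T *\<^sub>v (S *\<^sub>v (T *\<^sub>v x))"
    using T S x by (simp add: assoc_mult_mat_vec[of _ r c _ r] assoc_mult_mat_vec[of _ r c _ c])
  then show ?thesis using transp_form[of "transpose_mat T" r c "S *\<^sub>v (T *\<^sub>v x)" y] T S x y by simp
qed

lemma pd_inj: assumes X: "(X::real mat) \<in> carrier_mat d d"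
  and p: "\<And>v. v \<in> carrier_vec d \<Longrightarrow> v \<noteq> 0\<^sub>v d \<Longrightarrow> v \<bullet> (X *\<^sub>v v) > 0"
  and v: "v \<in> carrier_vec d" and z: "X *\<^sub>v v = 0\<^sub>v d"
shows "v = 0\<^sub>v d"
  using p[OF v] z v by (cases "v = 0\<^sub>v d") auto

lemma inv_facts: assumes X: "(X::real mat) \<in> carrier_mat d d" and s: "transpose_mat X = X"
  and p: "\<And>v. v \<in> carrier_vec d \<Longrightarrow> v \<noteq> 0\<^sub>v d \<Longrightarrow> v \<bullet> (X *\<^sub>v v) > 0"
  shows "minv X \<in> carrier_mat d d" "X * minv X = 1\<^sub>m d" "minv X * X = 1\<^sub>m d"
    "transpose_mat (minv X) = minv X"
    "\<And>v. v \<in> carrier_vec d \<Longrightarrow> v \<noteq> 0\<^sub>v d \<Longrightarrow> v \<bullet> (minv X *\<^sub>v v) > 0"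
    "\<And>v. v \<in> carrier_vec d \<Longrightarrow> v \<bullet> (minv X *\<^sub>v v) \<ge> 0"
    "\<And>v. v \<in> carrier_vec d \<Longrightarrow> X *\<^sub>v (minv X *\<^sub>v v) = v"
proof -
  note mp = minv_props[OF X pd_inj[OF X p]]
  show Y1: "minv X \<in> carrier_mat d d" by (rule mp(3))
  show Y2: "X * minv X = 1\<^sub>m d" by (rule mp(1))
  show Y3: "minv X * X = 1\<^sub>m d" by (rule mp(2))
  note Y = Y1 Y2 Y3
  show XY: "\<And>v. v \<in> carrier_vec d \<Longrightarrow> X *\<^sub>v (minv X *\<^sub>v v) = v"
    using Y X by (simp add: assoc_mult_mat_vec[symmetric, of _ d d _ d])
  have f: "\<And>v. v \<in> carrier_vec d \<Longrightarrow> v \<bullet> (minv X *\<^sub>v v) = (minv X *\<^sub>v v) \<bullet> (X *\<^sub>v (minv X *\<^sub>v v))"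
  proof -
    fix v :: "real vec" assume v: "v \<in> carrier_vec d"
    show "v \<bullet> (minv X *\<^sub>v v) = (minv X *\<^sub>v v) \<bullet> (X *\<^sub>v (minv X *\<^sub>v v))"
      using XY[OF v] Y X v comm_scalar_prod[of "minv X *\<^sub>v v" d v] by simp
  qed
  show "\<And>v. v \<in> carrier_vec d \<Longrightarrow> v \<noteq> 0\<^sub>v d \<Longrightarrow> v \<bullet> (minv X *\<^sub>v v) > 0"
  proof -
    fix v :: "real vec" assume v: "v \<in> carrier_vec d" "v \<noteq> 0\<^sub>v d"
    have "minv X *\<^sub>v v \<noteq> 0\<^sub>v d"
    proof
      assume "minv X *\<^sub>v v = 0\<^sub>v d"
      then have "v = X *\<^sub>v 0\<^sub>v d" using XY[OF v(1)] by simp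
      moreover have "X *\<^sub>v 0\<^sub>v d = 0\<^sub>v d" using X by (intro eq_vecI) auto
      ultimately show False using v by simp
    qed
    then show "v \<bullet> (minv X *\<^sub>v v) > 0" using f[OF v(1)] p[of "minv X *\<^sub>v v"] Y v by simp
  qed
  note pos = this
  show "\<And>v. v \<in> carrier_vec d \<Longrightarrow> v \<bullet> (minv X *\<^sub>v v) \<ge> 0"
  proof -
    fix v :: "real vec" assume v: "v \<in> carrier_vec d"
    show "v \<bullet> (minv X *\<^sub>v v) \<ge> 0"
    proof (cases "v = 0\<^sub>v d")
      case True then show ?thesis using Y by simp
    next
      case False then show ?thesis using pos[OF v] by simp
    qed
  qed
  show "transpose_mat (minv X) = minv X"
  proof (rule sym_from_forms[OF Y(1)])
    fix x y :: "real vec" assume xy: "x \<in> carrier_vec d" "y \<in> carrier_vec d"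
    define a where "a = minv X *\<^sub>v x"
    define b where "b = minv X *\<^sub>v y"
    have ab: "a \<in> carrier_vec d" "b \<in> carrier_vec d" unfolding a_def b_def using Y xy by auto
    have "y \<bullet> a = (X *\<^sub>v b) \<bullet> a" using XY[OF xy(2)] unfolding b_def by simp
    also have "\<dots> = a \<bullet> (X *\<^sub>v b)" using ab X comm_scalar_prod[of "X *\<^sub>v b" d a] by simp
    also have "\<dots> = b \<bullet> (X *\<^sub>v a)" using sym_form[OF X s ab(2) ab(1)] .
    also have "\<dots> = x \<bullet> b" using XY[OF xy(1)] ab X xy comm_scalar_prod[of b d x] unfolding a_def[symmetric] by simp
    finally show "y \<bullet> (minv X *\<^sub>v x) = x \<bullet> (minv X *\<^sub>v y)" unfolding a_def b_def .
  qed
qed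



theorem lemma2:
  fixes A B C D :: "real mat" and n m p N :: nat and Phi1 Phi2 :: "real mat"
  assumes "n > 0" "m > 0" "p > 0" "N > 0"
    and "A \<in> carrier_mat n n" "B \<in> carrier_mat n m" "C \<in> carrier_mat p n" "D \<in> carrier_mat p p"
    and "0\<^sub>m p p \<prec>\<^sub>L D * transpose_mat D"
    and "Phi1 \<in> carrier_mat (N * n) (N * n)" "Phi2 \<in> carrier_mat (N * n) (N * n)"
    and "transpose_mat Phi1 = Phi1" "transpose_mat Phi2 = Phi2"
    and "0\<^sub>m (N * n) (N * n) \<preceq>\<^sub>L Phi2" "Phi2 \<preceq>\<^sub>L Phi1"
    and "below_phi_tilde (MN A B C D n m p N) (N * n) Phi1"
  shows "OmegaPhi A B C D n m p N Phi1 \<preceq>\<^sub>L OmegaPhi A B C D n m p N Phi2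
     \<and> WPhi A B C D n m p N Phi2 \<preceq>\<^sub>L WPhi A B C D n m p N Phi1"
proof -
  define d where "d = N * n"
  define k where "k = N * m"
  define q where "q = N * p"
  define H where "H = HN A B C n m p N"
  define L where "L = LN A B n m N"
  define DD where "DD = DN D p N"
  define R where "R = RN A B n m N"
  have H: "H \<in> carrier_mat q k" unfolding H_def HN_def q_def k_def by (rule block_carrier)
  have L: "L \<in> carrier_mat d k" unfolding L_def LN_def d_def k_def by (rule block_carrier)
  have DD: "DD \<in> carrier_mat q q" unfolding DD_def DN_def q_def by (rule block_carrier)
  have R: "R \<in> carrier_mat n k" unfolding R_def RN_def k_def using block_carrier[of 1 N n m] by simp
  have P1: "Phi1 \<in> carrier_mat d d" and P2: "Phi2 \<in> carrier_mat d d" using assms(10,11) unfolding d_def by auto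
  have s1: "transpose_mat Phi1 = Phi1" and s2: "transpose_mat Phi2 = Phi2" using assms(12,13) .
  have d0: "d > 0" unfolding d_def using assms(1,4) by simp
  define E where "E = DD * transpose_mat DD"
  have E: "E \<in> carrier_mat q q" unfolding E_def using DD by simp
  have sE: "transpose_mat E = E" unfolding E_def using DD by (simp add: transpose_mult[of _ q q _ q])
  have pE: "\<And>v. v \<in> carrier_vec q \<Longrightarrow> v \<noteq> 0\<^sub>v q \<Longrightarrow> v \<bullet> (E *\<^sub>v v) > 0"
    unfolding E_def DD_def q_def using DN_pd[OF assms(8,3,9)] by blast
  define Ei where "Ei = minv E"
  note Ef = inv_facts[OF E sE pE, folded Ei_def]
  have Ei: "Ei \<in> carrier_mat q q" by (rule Ef(1))
  define K where "K = 1\<^sub>m k + transpose_mat H * Ei * H"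
  have K: "K \<in> carrier_mat k k" unfolding K_def using H Ei by simp
  have Kf: "\<And>x y. x \<in> carrier_vec k \<Longrightarrow> y \<in> carrier_vec k \<Longrightarrow>
     y \<bullet> (K *\<^sub>v x) = y \<bullet> x + (H *\<^sub>v y) \<bullet> (Ei *\<^sub>v (H *\<^sub>v x))"
  proof -
    fix x y :: "real vec" assume x: "x \<in> carrier_vec k" and y: "y \<in> carrier_vec k"
    define T where "T = transpose_mat H * Ei * H"
    have T: "T \<in> carrier_mat k k" unfolding T_def using H Ei by simp
    have "K *\<^sub>v x = x + T *\<^sub>v x" unfolding K_def T_def[symmetric]
      using add_mult_distrib_mat_vec[OF one_carrier_mat T x] x by simp
    then have "y \<bullet> (K *\<^sub>v x) = y \<bullet> x + y \<bullet> (T *\<^sub>v x)"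
      using scalar_prod_add_distrib[OF y x mult_mat_vec_carrier[OF T x]] by simp
    then have "y \<bullet> (K *\<^sub>v x) = y \<bullet> x + y \<bullet> ((transpose_mat H * Ei * H) *\<^sub>v x)"
      unfolding T_def .
    then show "y \<bullet> (K *\<^sub>v x) = y \<bullet> x + (H *\<^sub>v y) \<bullet> (Ei *\<^sub>v (H *\<^sub>v x))"
      using congr_form[OF H Ei x y] by simp
  qed
  have sK: "transpose_mat K = K"
  proof (rule sym_from_forms[OF K])
    fix x y :: "real vec" assume x: "x \<in> carrier_vec k" and y: "y \<in> carrier_vec k"
    have hx: "H *\<^sub>v x \<in> carrier_vec q" and hy: "H *\<^sub>v y \<in> carrier_vec q" using H x y by auto
    show "y \<bullet> (K *\<^sub>v x) = x \<bullet> (K *\<^sub>v y)"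
      unfolding Kf[OF x y] Kf[OF y x] using comm_scalar_prod[OF y x] sym_form[OF Ei Ef(4) hx hy] by simp
  qed
  have pK: "\<And>v. v \<in> carrier_vec k \<Longrightarrow> v \<noteq> 0\<^sub>v k \<Longrightarrow> v \<bullet> (K *\<^sub>v v) > 0"
  proof -
    fix v :: "real vec" assume v: "v \<in> carrier_vec k" "v \<noteq> 0\<^sub>v k"
    have "H *\<^sub>v v \<in> carrier_vec q" using H v by auto
    then have "(H *\<^sub>v v) \<bullet> (Ei *\<^sub>v (H *\<^sub>v v)) \<ge> 0" using Ef(6) by blast
    then show "v \<bullet> (K *\<^sub>v v) > 0" unfolding Kf[OF v(1) v(1)] using self_sp_gt0[OF v] by simp
  qed
  define Ki where "Ki = minv K"
  note Kif = inv_facts[OF K sK pK, folded Ki_def]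
  have Ki: "Ki \<in> carrier_mat k k" using Kif(1) by blast
  have sKi: "transpose_mat Ki = Ki" using Kif(4) by blast
  have KKi: "\<And>v. v \<in> carrier_vec k \<Longrightarrow> K *\<^sub>v (Ki *\<^sub>v v) = v" using Kif(7) by blast
  have pKi: "\<And>v. v \<in> carrier_vec k \<Longrightarrow> v \<noteq> 0\<^sub>v k \<Longrightarrow> v \<bullet> (Ki *\<^sub>v v) > 0" using Kif(5) by blast
  define M where "M = L * Ki * transpose_mat L"
  have MN: "MN A B C D n m p N = M"
    unfolding MN_def Let_def M_def Ki_def K_def Ei_def E_def H_def L_def DD_def k_def ..
  have M: "M \<in> carrier_mat d d" unfolding M_def using L Ki by simp
  have Mf: "\<And>x y. x \<in> carrier_vec d \<Longrightarrow> y \<in> carrier_vec d \<Longrightarrow>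
     y \<bullet> (M *\<^sub>v x) = (transpose_mat L *\<^sub>v y) \<bullet> (Ki *\<^sub>v (transpose_mat L *\<^sub>v x))"
    unfolding M_def using congr_form[of "transpose_mat L" k d Ki] L Ki by simp
  have sM: "transpose_mat M = M"
  proof (rule sym_from_forms[OF M])
    fix x y :: "real vec" assume x: "x \<in> carrier_vec d" and y: "y \<in> carrier_vec d"
    have hx: "transpose_mat L *\<^sub>v x \<in> carrier_vec k" and hy: "transpose_mat L *\<^sub>v y \<in> carrier_vec k" using L x y by auto
    show "y \<bullet> (M *\<^sub>v x) = x \<bullet> (M *\<^sub>v y)"
      unfolding Mf[OF x y] Mf[OF y x] using sym_form[OF Ki sKi hx hy] by simp
  qed

  have zero_mv: "\<And>X::real mat. X \<in> carrier_mat d d \<Longrightarrow> X *\<^sub>v 0\<^sub>v d = 0\<^sub>v d"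
    by (intro eq_vecI) auto
  have diff_form: "\<And>(X::real mat) Y v. X \<in> carrier_mat d d \<Longrightarrow> Y \<in> carrier_mat d d \<Longrightarrow> v \<in> carrier_vec d \<Longrightarrow>
      v \<bullet> ((X - Y) *\<^sub>v v) = v \<bullet> (X *\<^sub>v v) - v \<bullet> (Y *\<^sub>v v)"
  proof -
    fix X Y :: "real mat" and v :: "real vec"
    assume XY: "X \<in> carrier_mat d d" "Y \<in> carrier_mat d d" and v: "v \<in> carrier_vec d"
    show "v \<bullet> ((X - Y) *\<^sub>v v) = v \<bullet> (X *\<^sub>v v) - v \<bullet> (Y *\<^sub>v v)"
      using minus_mult_distrib_mat_vec[OF XY v]
        scalar_prod_minus_distrib[OF v mult_mat_vec_carrier[OF XY(1) v] mult_mat_vec_carrier[OF XY(2) v]]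
      by simp
  qed
  have h2nn: "\<And>v. v \<in> carrier_vec d \<Longrightarrow> v \<bullet> (Phi2 *\<^sub>v v) \<ge> 0"
  proof -
    fix v :: "real vec" assume v: "v \<in> carrier_vec d"
    have "psd (Phi2 - 0\<^sub>m d d)" using assms(14) unfolding loewner_le_def d_def by auto
    moreover have "dim_row (Phi2 - 0\<^sub>m d d) = d" by simp
    ultimately have "v \<bullet> ((Phi2 - 0\<^sub>m d d) *\<^sub>v v) \<ge> 0" unfolding psd_def using v by auto
    moreover have "0\<^sub>m d d *\<^sub>v v = 0\<^sub>v d" using v by (intro eq_vecI) auto
    ultimately show "v \<bullet> (Phi2 *\<^sub>v v) \<ge> 0" using diff_form[OF P2 _ v, of "0\<^sub>m d d"] v by simp
  qed
  have h21: "\<And>v. v \<in> carrier_vec d \<Longrightarrow> v \<bullet> (Phi2 *\<^sub>v v) \<le> v \<bullet> (Phi1 *\<^sub>v v)"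
  proof -
    fix v :: "real vec" assume v: "v \<in> carrier_vec d"
    have "psd (Phi1 - Phi2)" using assms(15) unfolding loewner_le_def by auto
    moreover have "dim_row (Phi1 - Phi2) = d" using P2 by simp
    ultimately have "v \<bullet> ((Phi1 - Phi2) *\<^sub>v v) \<ge> 0" unfolding psd_def using v by auto
    then show "v \<bullet> (Phi2 *\<^sub>v v) \<le> v \<bullet> (Phi1 *\<^sub>v v)" using diff_form[OF P1 P2 v] by simp
  qed
  have h1nn: "\<And>v. v \<in> carrier_vec d \<Longrightarrow> v \<bullet> (Phi1 *\<^sub>v v) \<ge> 0"
    using h2nn h21 by (meson order_trans)
  have Kpsd: "\<And>v. v \<in> carrier_vec k \<Longrightarrow> v \<bullet> (K *\<^sub>v v) \<ge> 0"
  proof -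
    fix v :: "real vec" assume v: "v \<in> carrier_vec k"
    show "v \<bullet> (K *\<^sub>v v) \<ge> 0"
    proof (cases "v = 0\<^sub>v k")
      case True then show ?thesis using K by simp
    next
      case False then show ?thesis using pK[OF v] by simp
    qed
  qed
  have csK: "\<And>a x. a \<in> carrier_vec k \<Longrightarrow> x \<in> carrier_vec k \<Longrightarrow>
      (a \<bullet> x)^2 \<le> (a \<bullet> (Ki *\<^sub>v a)) * (x \<bullet> (K *\<^sub>v x))"
  proof -
    fix a x :: "real vec" assume a: "a \<in> carrier_vec k" and x: "x \<in> carrier_vec k"
    define y where "y = Ki *\<^sub>v a"
    have y: "y \<in> carrier_vec k" unfolding y_def using Ki a by simp
    have Ky: "K *\<^sub>v y = a" unfolding y_def using KKi[OF a] .
    have e1: "y \<bullet> (K *\<^sub>v x) = a \<bullet> x"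
      using transp_form[OF K x y] sK Ky by simp
    have e2: "y \<bullet> (K *\<^sub>v y) = a \<bullet> (Ki *\<^sub>v a)"
      using Ky comm_scalar_prod[OF y a] unfolding y_def by simp
    show "(a \<bullet> x)^2 \<le> (a \<bullet> (Ki *\<^sub>v a)) * (x \<bullet> (K *\<^sub>v x))"
      using cs_form[OF K sK Kpsd x y] unfolding e1 e2 .
  qed
  have LB: "\<And>u. u \<in> carrier_vec k \<Longrightarrow> L *\<^sub>v u \<noteq> 0\<^sub>v d \<Longrightarrow> (L *\<^sub>v u) \<bullet> (Phi1 *\<^sub>v (L *\<^sub>v u)) < u \<bullet> (K *\<^sub>v u)"
  proof -
    fix u :: "real vec" assume u: "u \<in> carrier_vec k" and w0: "L *\<^sub>v u \<noteq> 0\<^sub>v d"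
    define w where "w = L *\<^sub>v u"
    have w: "w \<in> carrier_vec d" unfolding w_def using L u by simp
    have w0': "w \<noteq> 0\<^sub>v d" using w0 unfolding w_def .
    define a where "a = transpose_mat L *\<^sub>v w"
    have a: "a \<in> carrier_vec k" unfolding a_def using L w by simp
    have ww: "w \<bullet> w = a \<bullet> u" unfolding a_def using transp_form[OF L u w] unfolding w_def by simp
    have wMw: "w \<bullet> (M *\<^sub>v w) = a \<bullet> (Ki *\<^sub>v a)" unfolding a_def using Mf[OF w w] .
    have wpos: "w \<bullet> w > 0" using self_sp_gt0[OF w w0'] .
    show "(L *\<^sub>v u) \<bullet> (Phi1 *\<^sub>v (L *\<^sub>v u)) < u \<bullet> (K *\<^sub>v u)"
    proof (cases "M = 0\<^sub>m d d")
      case True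
      have "0\<^sub>m d d *\<^sub>v w = 0\<^sub>v d" using w by (intro eq_vecI) auto
      then have "w \<bullet> (M *\<^sub>v w) = 0" unfolding True using w by simp
      then have "a \<bullet> (Ki *\<^sub>v a) = 0" using wMw by simp
      then have "a = 0\<^sub>v k" using pKi[OF a] by (cases "a = 0\<^sub>v k") auto
      then have "w \<bullet> w = 0" using ww u by simp
      with wpos show ?thesis by simp
    next
      case False
      define lam where "lam = lambda_max M"
      define c where "c = 1 / lam"
      have lt: "Phi1 \<prec>\<^sub>L c \<cdot>\<^sub>m 1\<^sub>m d" using assms(16) False
        unfolding below_phi_tilde_def MN c_def lam_def d_def by simp
      have cf: "\<And>v. v \<in> carrier_vec d \<Longrightarrow> v \<noteq> 0\<^sub>v d \<Longrightarrow> v \<bullet> (Phi1 *\<^sub>v v) < c * (v \<bullet> v)"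
      proof -
        fix v :: "real vec" assume v: "v \<in> carrier_vec d" "v \<noteq> 0\<^sub>v d"
        have cI: "c \<cdot>\<^sub>m 1\<^sub>m d \<in> carrier_mat d d" by simp
        have "pd (c \<cdot>\<^sub>m 1\<^sub>m d - Phi1)" using lt unfolding loewner_lt_def by auto
        moreover have "dim_row (c \<cdot>\<^sub>m 1\<^sub>m d - Phi1) = d" using P1 by simp
        ultimately have "v \<bullet> ((c \<cdot>\<^sub>m 1\<^sub>m d - Phi1) *\<^sub>v v) > 0" unfolding pd_def using v by auto
        moreover have "(c \<cdot>\<^sub>m 1\<^sub>m d) *\<^sub>v v = c \<cdot>\<^sub>v v" using smult_mat_vec[OF one_carrier_mat v(1)] v by simp
        ultimately show "v \<bullet> (Phi1 *\<^sub>v v) < c * (v \<bullet> v)" using diff_form[OF cI P1 v(1)] v by simp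
      qed
      define e :: "real vec" where "e = unit_vec d 0"
      have e: "e \<in> carrier_vec d" "e \<noteq> 0\<^sub>v d" "e \<bullet> e = 1" unfolding e_def using d0 by auto
      have "0 < c" using cf[OF e(1,2)] h1nn[OF e(1)] e(3) by simp
      then have lam0: "lam > 0" and clam: "c * lam = 1" unfolding c_def by auto
      have spec: "w \<bullet> (M *\<^sub>v w) \<le> lam * (w \<bullet> w)" using spec_bound[OF M sM d0] w unfolding lam_def by blast
      have uKu: "u \<bullet> (K *\<^sub>v u) \<ge> 0" by (rule Kpsd[OF u])
      have "(w \<bullet> w)^2 \<le> (a \<bullet> (Ki *\<^sub>v a)) * (u \<bullet> (K *\<^sub>v u))" unfolding ww using csK[OF a u] .
      also have "\<dots> \<le> (lam * (w \<bullet> w)) * (u \<bullet> (K *\<^sub>v u))"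
        using mult_right_mono[OF spec uKu] unfolding wMw .
      finally have "(w \<bullet> w) * (w \<bullet> w) \<le> (w \<bullet> w) * (lam * (u \<bullet> (K *\<^sub>v u)))"
        by (simp add: power2_eq_square mult_ac)
      then have wl: "w \<bullet> w \<le> lam * (u \<bullet> (K *\<^sub>v u))" using wpos by simp
      have "w \<bullet> (Phi1 *\<^sub>v w) < c * (w \<bullet> w)" using cf[OF w w0'] .
      also have "\<dots> \<le> c * (lam * (u \<bullet> (K *\<^sub>v u)))" using wl \<open>0 < c\<close> by simp
      also have "\<dots> = u \<bullet> (K *\<^sub>v u)" using clam by (simp add: mult.assoc[symmetric])
      finally show ?thesis unfolding w_def .
    qed
  qed
  have KEY: "\<And>u. u \<in> carrier_vec k \<Longrightarrow> (L *\<^sub>v u) \<bullet> (Phi1 *\<^sub>v (L *\<^sub>v u)) \<le> u \<bullet> (K *\<^sub>v u)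
      \<and> (u \<noteq> 0\<^sub>v k \<longrightarrow> (L *\<^sub>v u) \<bullet> (Phi1 *\<^sub>v (L *\<^sub>v u)) < u \<bullet> (K *\<^sub>v u))"
  proof -
    fix u :: "real vec" assume u: "u \<in> carrier_vec k"
    show "(L *\<^sub>v u) \<bullet> (Phi1 *\<^sub>v (L *\<^sub>v u)) \<le> u \<bullet> (K *\<^sub>v u)
      \<and> (u \<noteq> 0\<^sub>v k \<longrightarrow> (L *\<^sub>v u) \<bullet> (Phi1 *\<^sub>v (L *\<^sub>v u)) < u \<bullet> (K *\<^sub>v u))"
    proof (cases "L *\<^sub>v u = 0\<^sub>v d")
      case True
      have z: "(L *\<^sub>v u) \<bullet> (Phi1 *\<^sub>v (L *\<^sub>v u)) = 0" unfolding True using zero_mv[OF P1] by simp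
      show ?thesis unfolding z using Kpsd[OF u] pK[OF u] by simp
    next
      case False
      then show ?thesis using LB[OF u] by simp
    qed
  qed

  have KEY2: "\<And>u. u \<in> carrier_vec k \<Longrightarrow> u \<noteq> 0\<^sub>v k \<Longrightarrow> (L *\<^sub>v u) \<bullet> (Phi2 *\<^sub>v (L *\<^sub>v u)) < u \<bullet> (K *\<^sub>v u)"
  proof -
    fix u :: "real vec" assume u: "u \<in> carrier_vec k" "u \<noteq> 0\<^sub>v k"
    have "L *\<^sub>v u \<in> carrier_vec d" using L u by simp
    then show "(L *\<^sub>v u) \<bullet> (Phi2 *\<^sub>v (L *\<^sub>v u)) < u \<bullet> (K *\<^sub>v u)" using h21 KEY[OF u(1)] u(2)
      by (meson order_le_less_trans)
  qed
  have KEY1: "\<And>u. u \<in> carrier_vec k \<Longrightarrow> u \<noteq> 0\<^sub>v k \<Longrightarrow> (L *\<^sub>v u) \<bullet> (Phi1 *\<^sub>v (L *\<^sub>v u)) < u \<bullet> (K *\<^sub>v u)"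
    using KEY by blast
  have Zf: "\<And>Phi x y. Phi \<in> carrier_mat d d \<Longrightarrow> x \<in> carrier_vec k \<Longrightarrow> y \<in> carrier_vec k \<Longrightarrow>
     y \<bullet> ((K - transpose_mat L * Phi * L) *\<^sub>v x) = y \<bullet> (K *\<^sub>v x) - (L *\<^sub>v y) \<bullet> (Phi *\<^sub>v (L *\<^sub>v x))"
  proof -
    fix Phi :: "real mat" and x y :: "real vec"
    assume Phi: "Phi \<in> carrier_mat d d" and x: "x \<in> carrier_vec k" and y: "y \<in> carrier_vec k"
    have T: "transpose_mat L * Phi * L \<in> carrier_mat k k" using L Phi by simp
    have "(K - transpose_mat L * Phi * L) *\<^sub>v x = K *\<^sub>v x - (transpose_mat L * Phi * L) *\<^sub>v x"
      by (rule minus_mult_distrib_mat_vec[OF K T x])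
    then have "y \<bullet> ((K - transpose_mat L * Phi * L) *\<^sub>v x) = y \<bullet> (K *\<^sub>v x) - y \<bullet> ((transpose_mat L * Phi * L) *\<^sub>v x)"
      using scalar_prod_minus_distrib[OF y mult_mat_vec_carrier[OF K x] mult_mat_vec_carrier[OF T x]] by simp
    then show "y \<bullet> ((K - transpose_mat L * Phi * L) *\<^sub>v x) = y \<bullet> (K *\<^sub>v x) - (L *\<^sub>v y) \<bullet> (Phi *\<^sub>v (L *\<^sub>v x))"
      using congr_form[OF L Phi x y] by simp
  qed
  have Zsym: "\<And>Phi. Phi \<in> carrier_mat d d \<Longrightarrow> transpose_mat Phi = Phi \<Longrightarrow>
     transpose_mat (K - transpose_mat L * Phi * L) = K - transpose_mat L * Phi * L"
  proof -
    fix Phi :: "real mat" assume Phi: "Phi \<in> carrier_mat d d" and sP: "transpose_mat Phi = Phi"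
    have Z: "K - transpose_mat L * Phi * L \<in> carrier_mat k k" using L Phi by (simp add: minus_carrier_mat)
    show "transpose_mat (K - transpose_mat L * Phi * L) = K - transpose_mat L * Phi * L"
    proof (rule sym_from_forms[OF Z])
      fix x y :: "real vec" assume x: "x \<in> carrier_vec k" and y: "y \<in> carrier_vec k"
      have lx: "L *\<^sub>v x \<in> carrier_vec d" and ly: "L *\<^sub>v y \<in> carrier_vec d" using L x y by auto
      show "y \<bullet> ((K - transpose_mat L * Phi * L) *\<^sub>v x) = x \<bullet> ((K - transpose_mat L * Phi * L) *\<^sub>v y)"
        unfolding Zf[OF Phi x y] Zf[OF Phi y x] using sym_form[OF K sK x y] sym_form[OF Phi sP lx ly] by simp
    qed
  qed
  define Z1 where "Z1 = K - transpose_mat L * Phi1 * L"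
  define Z2 where "Z2 = K - transpose_mat L * Phi2 * L"
  have Z1: "Z1 \<in> carrier_mat k k" and Z2: "Z2 \<in> carrier_mat k k" unfolding Z1_def Z2_def using L P1 P2 by (auto simp: minus_carrier_mat)
  have sZ1: "transpose_mat Z1 = Z1" unfolding Z1_def by (rule Zsym[OF P1 s1])
  have sZ2: "transpose_mat Z2 = Z2" unfolding Z2_def by (rule Zsym[OF P2 s2])
  have pZ1: "\<And>v. v \<in> carrier_vec k \<Longrightarrow> v \<noteq> 0\<^sub>v k \<Longrightarrow> v \<bullet> (Z1 *\<^sub>v v) > 0"
    unfolding Z1_def using Zf[OF P1] KEY1 by simp
  have pZ2: "\<And>v. v \<in> carrier_vec k \<Longrightarrow> v \<noteq> 0\<^sub>v k \<Longrightarrow> v \<bullet> (Z2 *\<^sub>v v) > 0"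
    unfolding Z2_def using Zf[OF P2] KEY2 by simp
  have nZ1: "\<And>v. v \<in> carrier_vec k \<Longrightarrow> v \<bullet> (Z1 *\<^sub>v v) \<ge> 0"
  proof -
    fix v :: "real vec" assume v: "v \<in> carrier_vec k"
    show "v \<bullet> (Z1 *\<^sub>v v) \<ge> 0"
    proof (cases "v = 0\<^sub>v k")
      case True then show ?thesis using Z1 by simp
    next
      case False then show ?thesis using pZ1[OF v] by simp
    qed
  qed
  have Z12: "\<And>v. v \<in> carrier_vec k \<Longrightarrow> v \<bullet> (Z1 *\<^sub>v v) \<le> v \<bullet> (Z2 *\<^sub>v v)"
  proof -
    fix v :: "real vec" assume v: "v \<in> carrier_vec k"
    have "L *\<^sub>v v \<in> carrier_vec d" using L v by simp
    then show "v \<bullet> (Z1 *\<^sub>v v) \<le> v \<bullet> (Z2 *\<^sub>v v)" unfolding Z1_def Z2_def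
      using Zf[OF P1 v v] Zf[OF P2 v v] h21 by simp
  qed
  note Z1f = inv_facts[OF Z1 sZ1 pZ1]
  note Z2f = inv_facts[OF Z2 sZ2 pZ2]
  have Q1: "minv Z1 \<in> carrier_mat k k" and iZ1: "Z1 * minv Z1 = 1\<^sub>m k" and sQ1: "transpose_mat (minv Z1) = minv Z1"
    using Z1f(1) Z1f(2) Z1f(4) by blast+
  have Q2: "minv Z2 \<in> carrier_mat k k" and iZ2: "Z2 * minv Z2 = 1\<^sub>m k" and sQ2: "transpose_mat (minv Z2) = minv Z2"
    using Z2f(1) Z2f(2) Z2f(4) by blast+
  have Q21: "\<And>v. v \<in> carrier_vec k \<Longrightarrow> v \<bullet> (minv Z2 *\<^sub>v v) \<le> v \<bullet> (minv Z1 *\<^sub>v v)"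
    using loewner_inv[OF Z1 Z2 sZ1 sZ2 nZ1 Z12 iZ1 Q1 iZ2 Q2] by blast
  have Weq: "\<And>Phi. WPhi A B C D n m p N Phi = transpose_mat (transpose_mat R) * minv (K - transpose_mat L * Phi * L) * transpose_mat R"
    unfolding WPhi_def QN_def Let_def R_def K_def Ei_def E_def H_def L_def DD_def k_def transpose_transpose ..
  have Rt: "transpose_mat R \<in> carrier_mat k n" using R by simp
  have Wf: "\<And>Q x y. Q \<in> carrier_mat k k \<Longrightarrow> x \<in> carrier_vec n \<Longrightarrow> y \<in> carrier_vec n \<Longrightarrow>
     y \<bullet> ((transpose_mat (transpose_mat R) * Q * transpose_mat R) *\<^sub>v x) = (transpose_mat R *\<^sub>v y) \<bullet> (Q *\<^sub>v (transpose_mat R *\<^sub>v x))"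
    using congr_form[OF Rt] by blast
  have Wle: "WPhi A B C D n m p N Phi2 \<preceq>\<^sub>L WPhi A B C D n m p N Phi1"
    unfolding Weq Z1_def[symmetric] Z2_def[symmetric]
  proof (rule loewner_le_forms)
    show "transpose_mat (transpose_mat R) * minv Z2 * transpose_mat R \<in> carrier_mat n n" using R Q2 by simp
    show "transpose_mat (transpose_mat R) * minv Z1 * transpose_mat R \<in> carrier_mat n n" using R Q1 by simp
    fix x y :: "real vec" assume x: "x \<in> carrier_vec n" and y: "y \<in> carrier_vec n"
    have rx: "transpose_mat R *\<^sub>v x \<in> carrier_vec k" and ry: "transpose_mat R *\<^sub>v y \<in> carrier_vec k" using R x y by auto
    show "y \<bullet> ((transpose_mat (transpose_mat R) * minv Z1 * transpose_mat R) *\<^sub>v x) -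
          y \<bullet> ((transpose_mat (transpose_mat R) * minv Z2 * transpose_mat R) *\<^sub>v x) =
          x \<bullet> ((transpose_mat (transpose_mat R) * minv Z1 * transpose_mat R) *\<^sub>v y) -
          x \<bullet> ((transpose_mat (transpose_mat R) * minv Z2 * transpose_mat R) *\<^sub>v y)"
      unfolding Wf[OF Q1 x y] Wf[OF Q2 x y] Wf[OF Q1 y x] Wf[OF Q2 y x]
      using sym_form[OF Q1 sQ1 rx ry] sym_form[OF Q2 sQ2 rx ry] by simp
  next
    fix v :: "real vec" assume v: "v \<in> carrier_vec n"
    have rv: "transpose_mat R *\<^sub>v v \<in> carrier_vec k" using R v by auto
    show "v \<bullet> ((transpose_mat (transpose_mat R) * minv Z2 * transpose_mat R) *\<^sub>v v) \<le>
          v \<bullet> ((transpose_mat (transpose_mat R) * minv Z1 * transpose_mat R) *\<^sub>v v)"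
      unfolding Wf[OF Q1 v v] Wf[OF Q2 v v] using Q21[OF rv] .
  qed

  have Tf: "\<And>Phi a. Phi \<in> carrier_mat d d \<Longrightarrow> a \<in> carrier_vec d \<Longrightarrow>
      (1\<^sub>m d - M * Phi) *\<^sub>v a = a - M *\<^sub>v (Phi *\<^sub>v a)"
  proof -
    fix Phi :: "real mat" and a :: "real vec" assume Phi: "Phi \<in> carrier_mat d d" and a: "a \<in> carrier_vec d"
    have MP: "M * Phi \<in> carrier_mat d d" using M Phi by simp
    show "(1\<^sub>m d - M * Phi) *\<^sub>v a = a - M *\<^sub>v (Phi *\<^sub>v a)"
      using minus_mult_distrib_mat_vec[OF one_carrier_mat MP a] assoc_mult_mat_vec[OF M Phi a] a by simp
  qed
  have Tinj: "\<And>Phi a. Phi \<in> carrier_mat d d \<Longrightarrow>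
      (\<And>u. u \<in> carrier_vec k \<Longrightarrow> u \<noteq> 0\<^sub>v k \<Longrightarrow> (L *\<^sub>v u) \<bullet> (Phi *\<^sub>v (L *\<^sub>v u)) < u \<bullet> (K *\<^sub>v u)) \<Longrightarrow>
      a \<in> carrier_vec d \<Longrightarrow> (1\<^sub>m d - M * Phi) *\<^sub>v a = 0\<^sub>v d \<Longrightarrow> a = 0\<^sub>v d"
  proof -
    fix Phi :: "real mat" and a :: "real vec"
    assume Phi: "Phi \<in> carrier_mat d d"
      and key: "\<And>u. u \<in> carrier_vec k \<Longrightarrow> u \<noteq> 0\<^sub>v k \<Longrightarrow> (L *\<^sub>v u) \<bullet> (Phi *\<^sub>v (L *\<^sub>v u)) < u \<bullet> (K *\<^sub>v u)"
      and a: "a \<in> carrier_vec d" and z: "(1\<^sub>m d - M * Phi) *\<^sub>v a = 0\<^sub>v d"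
    define y where "y = Phi *\<^sub>v a"
    have y: "y \<in> carrier_vec d" unfolding y_def using Phi a by simp
    define u where "u = Ki *\<^sub>v (transpose_mat L *\<^sub>v y)"
    have ly: "transpose_mat L *\<^sub>v y \<in> carrier_vec k" using L y by simp
    have u: "u \<in> carrier_vec k" unfolding u_def using Ki ly by simp
    have My: "M *\<^sub>v y = L *\<^sub>v u" unfolding M_def u_def
      using L Ki y by (simp add: assoc_mult_mat_vec[of _ d k _ d] assoc_mult_mat_vec[of _ k k _ d])
    have "a - M *\<^sub>v y = 0\<^sub>v d" using z Tf[OF Phi a] unfolding y_def by simp
    then have aLu: "a = L *\<^sub>v u" unfolding My[symmetric]
    proof -
      assume h: "a - M *\<^sub>v y = 0\<^sub>v d"
      show "a = M *\<^sub>v y"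
      proof (rule eq_vecI)
        fix i assume "i < dim_vec (M *\<^sub>v y)"
        then have i: "i < d" using M by simp
        have "(a - M *\<^sub>v y) $ i = 0" using h i by simp
        then show "a $ i = (M *\<^sub>v y) $ i" using i a M y by simp
      qed (use a M in simp)
    qed
    have uKu: "u \<bullet> (K *\<^sub>v u) = a \<bullet> (Phi *\<^sub>v a)"
    proof -
      have "u \<bullet> (K *\<^sub>v u) = u \<bullet> (transpose_mat L *\<^sub>v y)" unfolding u_def using KKi[OF ly] by simp
      also have "\<dots> = (transpose_mat L *\<^sub>v y) \<bullet> u" using comm_scalar_prod[OF u ly] .
      also have "\<dots> = y \<bullet> (L *\<^sub>v u)" using transp_form[OF L u y] by simp
      also have "\<dots> = (L *\<^sub>v u) \<bullet> y" using comm_scalar_prod[OF y, of "L *\<^sub>v u"] L u by simp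
      finally show ?thesis unfolding aLu[symmetric] y_def .
    qed
    show "a = 0\<^sub>v d"
    proof (cases "u = 0\<^sub>v k")
      case True
      have "L *\<^sub>v 0\<^sub>v k = 0\<^sub>v d" using L by (intro eq_vecI) auto
      then show ?thesis using aLu True by simp
    next
      case False
      have "(L *\<^sub>v u) \<bullet> (Phi *\<^sub>v (L *\<^sub>v u)) < u \<bullet> (K *\<^sub>v u)" using key[OF u False] .
      then show ?thesis unfolding uKu aLu[symmetric] by simp
    qed
  qed

  define Pm1 where "Pm1 = minv (1\<^sub>m d - M * Phi1)"
  define Pm2 where "Pm2 = minv (1\<^sub>m d - M * Phi2)"
  have T1: "1\<^sub>m d - M * Phi1 \<in> carrier_mat d d" using M P1 by (simp add: minus_carrier_mat)
  have T2: "1\<^sub>m d - M * Phi2 \<in> carrier_mat d d" using M P2 by (simp add: minus_carrier_mat)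
  note mp1 = minv_props[OF T1 Tinj[OF P1 KEY1], folded Pm1_def]
  note mp2 = minv_props[OF T2 Tinj[OF P2 KEY2], folded Pm2_def]
  have Pm1: "Pm1 \<in> carrier_mat d d" and Pm2: "Pm2 \<in> carrier_mat d d" using mp1(3) mp2(3) by blast+
  have TPm1: "(1\<^sub>m d - M * Phi1) * Pm1 = 1\<^sub>m d" using mp1(1) by blast
  have TPm2: "(1\<^sub>m d - M * Phi2) * Pm2 = 1\<^sub>m d" using mp2(1) by blast
  have TP1: "\<And>x. x \<in> carrier_vec d \<Longrightarrow> Pm1 *\<^sub>v x - M *\<^sub>v (Phi1 *\<^sub>v (Pm1 *\<^sub>v x)) = x"
  proof -
    fix x :: "real vec" assume x: "x \<in> carrier_vec d"
    have px: "Pm1 *\<^sub>v x \<in> carrier_vec d" using Pm1 x by simp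
    have "Pm1 *\<^sub>v x - M *\<^sub>v (Phi1 *\<^sub>v (Pm1 *\<^sub>v x)) = (1\<^sub>m d - M * Phi1) *\<^sub>v (Pm1 *\<^sub>v x)"
      by (rule sym, rule Tf[OF P1 px])
    also have "\<dots> = ((1\<^sub>m d - M * Phi1) * Pm1) *\<^sub>v x" by (rule assoc_mult_mat_vec[OF T1 Pm1 x, symmetric])
    also have "\<dots> = 1\<^sub>m d *\<^sub>v x" by (simp only: TPm1)
    also have "\<dots> = x" using x by simp
    finally show "Pm1 *\<^sub>v x - M *\<^sub>v (Phi1 *\<^sub>v (Pm1 *\<^sub>v x)) = x" .
  qed
  have TP2: "\<And>x. x \<in> carrier_vec d \<Longrightarrow> Pm2 *\<^sub>v x - M *\<^sub>v (Phi2 *\<^sub>v (Pm2 *\<^sub>v x)) = x"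
  proof -
    fix x :: "real vec" assume x: "x \<in> carrier_vec d"
    have px: "Pm2 *\<^sub>v x \<in> carrier_vec d" using Pm2 x by simp
    have "Pm2 *\<^sub>v x - M *\<^sub>v (Phi2 *\<^sub>v (Pm2 *\<^sub>v x)) = (1\<^sub>m d - M * Phi2) *\<^sub>v (Pm2 *\<^sub>v x)"
      by (rule sym, rule Tf[OF P2 px])
    also have "\<dots> = ((1\<^sub>m d - M * Phi2) * Pm2) *\<^sub>v x" by (rule assoc_mult_mat_vec[OF T2 Pm2 x, symmetric])
    also have "\<dots> = 1\<^sub>m d *\<^sub>v x" by (simp only: TPm2)
    also have "\<dots> = x" using x by simp
    finally show "Pm2 *\<^sub>v x - M *\<^sub>v (Phi2 *\<^sub>v (Pm2 *\<^sub>v x)) = x" .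
  qed
  have Gsym: "\<And>Phi P x y. Phi \<in> carrier_mat d d \<Longrightarrow> transpose_mat Phi = Phi \<Longrightarrow> P \<in> carrier_mat d d \<Longrightarrow>
      (\<And>x. x \<in> carrier_vec d \<Longrightarrow> P *\<^sub>v x - M *\<^sub>v (Phi *\<^sub>v (P *\<^sub>v x)) = x) \<Longrightarrow>
      x \<in> carrier_vec d \<Longrightarrow> y \<in> carrier_vec d \<Longrightarrow> y \<bullet> (Phi *\<^sub>v (P *\<^sub>v x)) = x \<bullet> (Phi *\<^sub>v (P *\<^sub>v y))"
  proof -
    fix Phi P :: "real mat" and x y :: "real vec"
    assume Phi: "Phi \<in> carrier_mat d d" and sP: "transpose_mat Phi = Phi" and P: "P \<in> carrier_mat d d"
      and TP: "\<And>x. x \<in> carrier_vec d \<Longrightarrow> P *\<^sub>v x - M *\<^sub>v (Phi *\<^sub>v (P *\<^sub>v x)) = x"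
      and x: "x \<in> carrier_vec d" and y: "y \<in> carrier_vec d"
    define a where "a = P *\<^sub>v x"
    define b where "b = P *\<^sub>v y"
    have a: "a \<in> carrier_vec d" and b: "b \<in> carrier_vec d" unfolding a_def b_def using P x y by auto
    have pa: "Phi *\<^sub>v a \<in> carrier_vec d" and pb: "Phi *\<^sub>v b \<in> carrier_vec d" using Phi a b by auto
    have ma: "M *\<^sub>v (Phi *\<^sub>v a) \<in> carrier_vec d" and mb: "M *\<^sub>v (Phi *\<^sub>v b) \<in> carrier_vec d" using M pa pb by auto
    have xa: "x = a - M *\<^sub>v (Phi *\<^sub>v a)" using TP[OF x] unfolding a_def by simp
    have yb: "y = b - M *\<^sub>v (Phi *\<^sub>v b)" using TP[OF y] unfolding b_def by simp
    have "y \<bullet> (Phi *\<^sub>v a) = b \<bullet> (Phi *\<^sub>v a) - (M *\<^sub>v (Phi *\<^sub>v b)) \<bullet> (Phi *\<^sub>v a)"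
      unfolding yb using minus_scalar_prod_distrib[OF b mb pa] .
    also have "(M *\<^sub>v (Phi *\<^sub>v b)) \<bullet> (Phi *\<^sub>v a) = (Phi *\<^sub>v b) \<bullet> (M *\<^sub>v (Phi *\<^sub>v a))"
      by (rule trans[OF comm_scalar_prod[OF mb pa] sym_form[OF M sM pb pa]])
    also have "b \<bullet> (Phi *\<^sub>v a) = a \<bullet> (Phi *\<^sub>v b)" using sym_form[OF Phi sP a b] .
    also have "(Phi *\<^sub>v b) \<bullet> (M *\<^sub>v (Phi *\<^sub>v a)) = (M *\<^sub>v (Phi *\<^sub>v a)) \<bullet> (Phi *\<^sub>v b)"
      using comm_scalar_prod[OF pb ma] .
    also have "a \<bullet> (Phi *\<^sub>v b) - (M *\<^sub>v (Phi *\<^sub>v a)) \<bullet> (Phi *\<^sub>v b) = x \<bullet> (Phi *\<^sub>v b)"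
      unfolding xa using minus_scalar_prod_distrib[OF a ma pb] by simp
    finally show "y \<bullet> (Phi *\<^sub>v (P *\<^sub>v x)) = x \<bullet> (Phi *\<^sub>v (P *\<^sub>v y))" unfolding a_def b_def .
  qed

  have MAIN: "\<And>x. x \<in> carrier_vec d \<Longrightarrow> x \<bullet> (Phi2 *\<^sub>v (Pm2 *\<^sub>v x)) \<le> x \<bullet> (Phi1 *\<^sub>v (Pm1 *\<^sub>v x))"
  proof -
    fix x :: "real vec" assume x: "x \<in> carrier_vec d"
    define a where "a = Pm2 *\<^sub>v x"
    define b where "b = Pm1 *\<^sub>v x"
    define u where "u = Phi1 *\<^sub>v b"
    define v where "v = Phi2 *\<^sub>v a"
    define dl where "dl = u - v"
    define g where "g = M *\<^sub>v dl"
    have a: "a \<in> carrier_vec d" unfolding a_def using Pm2 x by simp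
    have b: "b \<in> carrier_vec d" unfolding b_def using Pm1 x by simp
    have u: "u \<in> carrier_vec d" unfolding u_def using P1 b by simp
    have v: "v \<in> carrier_vec d" unfolding v_def using P2 a by simp
    have dl: "dl \<in> carrier_vec d" unfolding dl_def using u v by simp
    have g: "g \<in> carrier_vec d" unfolding g_def using M dl by simp
    have Mu: "M *\<^sub>v u \<in> carrier_vec d" and Mv: "M *\<^sub>v v \<in> carrier_vec d" using M u v by auto
    have xa: "a - M *\<^sub>v v = x" unfolding a_def v_def using TP2[OF x] .
    have xb: "b - M *\<^sub>v u = x" unfolding b_def u_def using TP1[OF x] .
    have gmu: "g = M *\<^sub>v u - M *\<^sub>v v" unfolding g_def dl_def by (rule mult_minus_distrib_mat_vec[OF M u v])
    have bag: "b = a + g"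
    proof (rule eq_vecI)
      fix i assume "i < dim_vec (a + g)"
      then have i: "i < d" using g by simp
      have "(a - M *\<^sub>v v) $ i = (b - M *\<^sub>v u) $ i" using xa xb by simp
      then have "a $ i - (M *\<^sub>v v) $ i = b $ i - (M *\<^sub>v u) $ i" using i a b M by simp
      moreover have "g $ i = (M *\<^sub>v u) $ i - (M *\<^sub>v v) $ i" using gmu i M by simp
      ultimately show "b $ i = (a + g) $ i" using i g by simp
    qed (use a b g in simp)
    have p1a: "Phi1 *\<^sub>v a \<in> carrier_vec d" and p1g: "Phi1 *\<^sub>v g \<in> carrier_vec d"
      and p2g: "Phi2 *\<^sub>v g \<in> carrier_vec d" using P1 P2 a g by auto
    have uexp: "u = Phi1 *\<^sub>v a + Phi1 *\<^sub>v g" unfolding u_def bag by (rule mult_add_distrib_mat_vec[OF P1 a g])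
    have t1: "x \<bullet> dl = x \<bullet> u - x \<bullet> v" unfolding dl_def by (rule scalar_prod_minus_distrib[OF x u v])
    have t2: "x \<bullet> dl = a \<bullet> dl - (M *\<^sub>v v) \<bullet> dl" unfolding xa[symmetric] by (rule minus_scalar_prod_distrib[OF a Mv dl])
    have t3: "(M *\<^sub>v v) \<bullet> dl = v \<bullet> g" unfolding g_def
      by (rule trans[OF comm_scalar_prod[OF Mv dl] sym_form[OF M sM v dl]])
    have t4: "v \<bullet> g = a \<bullet> (Phi2 *\<^sub>v g)" unfolding v_def
      by (rule trans[OF comm_scalar_prod[OF mult_mat_vec_carrier[OF P2 a] g] sym_form[OF P2 s2 a g]])
    have t5a: "a \<bullet> dl = a \<bullet> u - a \<bullet> v" unfolding dl_def by (rule scalar_prod_minus_distrib[OF a u v])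
    have t5b: "a \<bullet> u = a \<bullet> (Phi1 *\<^sub>v a) + a \<bullet> (Phi1 *\<^sub>v g)" unfolding uexp by (rule scalar_prod_add_distrib[OF a p1a p1g])
    have t6a: "dl \<bullet> g = u \<bullet> g - v \<bullet> g" unfolding dl_def by (rule minus_scalar_prod_distrib[OF u v g])
    have t6b: "u \<bullet> g = (Phi1 *\<^sub>v a) \<bullet> g + (Phi1 *\<^sub>v g) \<bullet> g" unfolding uexp by (rule add_scalar_prod_distrib[OF p1a p1g g])
    have t6c: "(Phi1 *\<^sub>v a) \<bullet> g = a \<bullet> (Phi1 *\<^sub>v g)"
      by (rule trans[OF comm_scalar_prod[OF p1a g] sym_form[OF P1 s1 a g]])
    have t6d: "(Phi1 *\<^sub>v g) \<bullet> g = g \<bullet> (Phi1 *\<^sub>v g)" by (rule comm_scalar_prod[OF p1g g])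
    have t7: "a \<bullet> v = a \<bullet> (Phi2 *\<^sub>v a)" unfolding v_def ..
    define w where "w = Ki *\<^sub>v (transpose_mat L *\<^sub>v dl)"
    have ld: "transpose_mat L *\<^sub>v dl \<in> carrier_vec k" using L dl by simp
    have w: "w \<in> carrier_vec k" unfolding w_def using Ki ld by simp
    have gLw: "g = L *\<^sub>v w" unfolding g_def M_def w_def
      using L Ki dl by (simp add: assoc_mult_mat_vec[of _ d k _ d] assoc_mult_mat_vec[of _ k k _ d])
    have wKw: "w \<bullet> (K *\<^sub>v w) = dl \<bullet> g"
    proof -
      have "w \<bullet> (K *\<^sub>v w) = w \<bullet> (transpose_mat L *\<^sub>v dl)" unfolding w_def using KKi[OF ld] by simp
      also have "\<dots> = (transpose_mat L *\<^sub>v dl) \<bullet> w" by (rule comm_scalar_prod[OF w ld])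
      also have "\<dots> = dl \<bullet> (L *\<^sub>v w)" using transp_form[OF L w dl] by simp
      finally show ?thesis unfolding gLw .
    qed
    have kg: "g \<bullet> (Phi1 *\<^sub>v g) \<le> dl \<bullet> g" using KEY[OF w] unfolding gLw[symmetric] wKw by simp
    have h: "a \<bullet> (Phi2 *\<^sub>v a) \<le> a \<bullet> (Phi1 *\<^sub>v a)" by (rule h21[OF a])
    have "x \<bullet> v \<le> x \<bullet> u" using t1 t2 t3 t4 t5a t5b t6a t6b t6c t6d t7 kg h by linarith
    then show "x \<bullet> (Phi2 *\<^sub>v (Pm2 *\<^sub>v x)) \<le> x \<bullet> (Phi1 *\<^sub>v (Pm1 *\<^sub>v x))" unfolding u_def v_def a_def b_def .
  qed

  have Seq1: "SinvN A B C D n m p N Phi1 = - (Phi1 * Pm1)"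
    unfolding SinvN_def MN Pm1_def d_def ..
  have Seq2: "SinvN A B C D n m p N Phi2 = - (Phi2 * Pm2)"
    unfolding SinvN_def MN Pm2_def d_def ..
  have Sf: "\<And>(Phi::real mat) P x y. Phi \<in> carrier_mat d d \<Longrightarrow> P \<in> carrier_mat d d \<Longrightarrow> x \<in> carrier_vec d \<Longrightarrow> y \<in> carrier_vec d \<Longrightarrow>
     y \<bullet> ((- (Phi * P)) *\<^sub>v x) = - (y \<bullet> (Phi *\<^sub>v (P *\<^sub>v x)))"
  proof -
    fix Phi P :: "real mat" and x y :: "real vec"
    assume Phi: "Phi \<in> carrier_mat d d" and P: "P \<in> carrier_mat d d" and x: "x \<in> carrier_vec d" and y: "y \<in> carrier_vec d"
    have "(- (Phi * P)) *\<^sub>v x = - ((Phi * P) *\<^sub>v x)" using Phi P x by (intro uminus_mult_mat_vec) simp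
    also have "(Phi * P) *\<^sub>v x = Phi *\<^sub>v (P *\<^sub>v x)" by (rule assoc_mult_mat_vec[OF Phi P x])
    finally have e: "(- (Phi * P)) *\<^sub>v x = - (Phi *\<^sub>v (P *\<^sub>v x))" .
    show "y \<bullet> ((- (Phi * P)) *\<^sub>v x) = - (y \<bullet> (Phi *\<^sub>v (P *\<^sub>v x)))" unfolding e
      using Phi P x y by (intro scalar_prod_uminus_right) simp
  qed
  define J where "J = JN A B C D n m p N"
  define ON0 where "ON0 = OmegaN A B C D n m p N"
  have J: "J \<in> carrier_mat d n" unfolding J_def JN_def Let_def ON_def ONR_def block_mat_def carrier_mat_def d_def
    using L d_def unfolding L_def by simp
  have ON0: "ON0 \<in> carrier_mat n n" unfolding ON0_def OmegaN_def Let_def ON_def block_mat_def carrier_mat_def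
    by simp
  have S1: "- (Phi1 * Pm1) \<in> carrier_mat d d" using P1 Pm1 by simp
  have S2: "- (Phi2 * Pm2) \<in> carrier_mat d d" using P2 Pm2 by simp
  have Oeq1: "OmegaPhi A B C D n m p N Phi1 = ON0 + transpose_mat J * (- (Phi1 * Pm1)) * J"
    unfolding OmegaPhi_def Seq1 J_def ON0_def ..
  have Oeq2: "OmegaPhi A B C D n m p N Phi2 = ON0 + transpose_mat J * (- (Phi2 * Pm2)) * J"
    unfolding OmegaPhi_def Seq2 J_def ON0_def ..
  have Of: "\<And>(S::real mat) x y. S \<in> carrier_mat d d \<Longrightarrow> x \<in> carrier_vec n \<Longrightarrow> y \<in> carrier_vec n \<Longrightarrow>
     y \<bullet> ((ON0 + transpose_mat J * S * J) *\<^sub>v x) = y \<bullet> (ON0 *\<^sub>v x) + (J *\<^sub>v y) \<bullet> (S *\<^sub>v (J *\<^sub>v x))"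
  proof -
    fix S :: "real mat" and x y :: "real vec"
    assume S: "S \<in> carrier_mat d d" and x: "x \<in> carrier_vec n" and y: "y \<in> carrier_vec n"
    have T: "transpose_mat J * S * J \<in> carrier_mat n n" using J S by simp
    have "(ON0 + transpose_mat J * S * J) *\<^sub>v x = ON0 *\<^sub>v x + (transpose_mat J * S * J) *\<^sub>v x"
      by (rule add_mult_distrib_mat_vec[OF ON0 T x])
    then have "y \<bullet> ((ON0 + transpose_mat J * S * J) *\<^sub>v x) = y \<bullet> (ON0 *\<^sub>v x) + y \<bullet> ((transpose_mat J * S * J) *\<^sub>v x)"
      using scalar_prod_add_distrib[OF y mult_mat_vec_carrier[OF ON0 x] mult_mat_vec_carrier[OF T x]] by simp
    then show "y \<bullet> ((ON0 + transpose_mat J * S * J) *\<^sub>v x) = y \<bullet> (ON0 *\<^sub>v x) + (J *\<^sub>v y) \<bullet> (S *\<^sub>v (J *\<^sub>v x))"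
      using congr_form[OF J S x y] by simp
  qed
  have Ole: "OmegaPhi A B C D n m p N Phi1 \<preceq>\<^sub>L OmegaPhi A B C D n m p N Phi2"
    unfolding Oeq1 Oeq2
  proof (rule loewner_le_forms)
    show "ON0 + transpose_mat J * (- (Phi1 * Pm1)) * J \<in> carrier_mat n n" using J S1 by simp
    show "ON0 + transpose_mat J * (- (Phi2 * Pm2)) * J \<in> carrier_mat n n" using J S2 by simp
    fix x y :: "real vec" assume x: "x \<in> carrier_vec n" and y: "y \<in> carrier_vec n"
    have jx: "J *\<^sub>v x \<in> carrier_vec d" and jy: "J *\<^sub>v y \<in> carrier_vec d" using J x y by auto
    show "y \<bullet> ((ON0 + transpose_mat J * (- (Phi2 * Pm2)) * J) *\<^sub>v x) -
          y \<bullet> ((ON0 + transpose_mat J * (- (Phi1 * Pm1)) * J) *\<^sub>v x) =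
          x \<bullet> ((ON0 + transpose_mat J * (- (Phi2 * Pm2)) * J) *\<^sub>v y) -
          x \<bullet> ((ON0 + transpose_mat J * (- (Phi1 * Pm1)) * J) *\<^sub>v y)"
      unfolding Of[OF S1 x y] Of[OF S2 x y] Of[OF S1 y x] Of[OF S2 y x]
        Sf[OF P1 Pm1 jx jy] Sf[OF P2 Pm2 jx jy] Sf[OF P1 Pm1 jy jx] Sf[OF P2 Pm2 jy jx]
      using Gsym[OF P1 s1 Pm1 TP1 jx jy] Gsym[OF P2 s2 Pm2 TP2 jx jy] by simp
  next
    fix v :: "real vec" assume v: "v \<in> carrier_vec n"
    have jv: "J *\<^sub>v v \<in> carrier_vec d" using J v by auto
    show "v \<bullet> ((ON0 + transpose_mat J * (- (Phi1 * Pm1)) * J) *\<^sub>v v) \<le>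
          v \<bullet> ((ON0 + transpose_mat J * (- (Phi2 * Pm2)) * J) *\<^sub>v v)"
      unfolding Of[OF S1 v v] Of[OF S2 v v] Sf[OF P1 Pm1 jv jv] Sf[OF P2 Pm2 jv jv]
      using MAIN[OF jv] by simp
  qed
  show ?thesis using Ole Wle by simp
qed


end
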